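(* Let $a,b\ge 3$ and $k\ge 2$ be integers and let $G=CB(k,a,b)$ be the cycle barbell. Then \begin{align*} \mathscr{K}_e(G)=\frac{1}{a+b+k-1}\Bigg[&\frac{(a+1)(a-1)}{6}\bigl(a+2(b+k-1)\bigr)+\frac{(b+1)(b-1)}{6}\bigl(b+2(a+k-1)\bigr)\\ &+(a+b)(k-1)^2+\frac{(k-1)(2k^2-4k+3)}{6}+2ab(k-1)\Bigg]+a+b+k. \end{align*}
   Context: The cycle barbell $CB(k,a,b)$ is the graph obtained from a cycle $C_a$, a path $P_k$ on $k$ vertices and a cycle $C_b$ by identifying one endpoint of the path with a vertex of $C_a$ and the other endpoint with a vertex of $C_b$. It has $a+b+k-2$ vertices and $a+b+k-1$ edges. Kemeny's constant of an irreducible finite Markov chain with transition matrix $P$ whose eigenvalues (with multiplicity) are $1=\rho_1,\rho_2,\dots,\rho_N$ (with $1$ simple) is $\mathscr{K}(P)=\sum_{i=2}^{N}\frac{1}{1-\rho_i}$. $\mathscr{K}_e(G)$ is Kemeny's constant of the simple random walk on the arcs of $G$ (ordered pairs $(u,v)$ with $\{u,v\}$ an edge), where from $(u,v)$ one moves to $(v,w)$ with probability $1/\deg(v)$ for each neighbor $w$ of $v$. *)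

theory Defs
  imports "Jordan_Normal_Form.Char_Poly" "HOL-Computational_Algebra.Fundamental_Theorem_Algebra" "HOL-Library.Product_Lexorder"
begin

(* Simple graphs on nat vertices, given by a symmetric irreflexive adjacency predicate. *)

(* Cycle barbell CB(k,a,b), vertices 0 .. a+b+k-3:
   C_a on vertices 0..a-1 (i ~ (i+1) mod a);
   path P_k: 0 = p_0, p_j = a+j-1 (1 <= j <= k-1), consecutive p_j ~ p_{j+1};
   C_b on vertices c..c+b-1 with c = a+k-2 (c+i ~ c+((i+1) mod b));
   the path endpoint p_{k-1} = c is the identified vertex of C_b,
   p_0 = 0 the identified vertex of C_a. *)

definition cb_vertices :: "nat \<Rightarrow> nat \<Rightarrow> nat \<Rightarrow> nat set" where
  "cb_vertices k a b = {..<a+b+k-2}"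

definition cb_path_vertex :: "nat \<Rightarrow> nat \<Rightarrow> nat" where
  "cb_path_vertex a j = (if j = 0 then 0 else a + j - 1)"

definition cb_edge_dir :: "nat \<Rightarrow> nat \<Rightarrow> nat \<Rightarrow> nat \<Rightarrow> nat \<Rightarrow> bool" where
  "cb_edge_dir k a b u v \<longleftrightarrow>
     (\<exists>i<a. u = i \<and> v = (i + 1) mod a)
   \<or> (\<exists>j. j + 1 < k \<and> u = cb_path_vertex a j \<and> v = cb_path_vertex a (j + 1))
   \<or> (\<exists>i<b. u = a + k - 2 + i \<and> v = a + k - 2 + (i + 1) mod b)"

definition cb_adj :: "nat \<Rightarrow> nat \<Rightarrow> nat \<Rightarrow> nat \<Rightarrow> nat \<Rightarrow> bool" where
  "cb_adj k a b u v \<longleftrightarrow> cb_edge_dir k a b u v \<or> cb_edge_dir k a b v u"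

definition arcs :: "nat set \<Rightarrow> (nat \<Rightarrow> nat \<Rightarrow> bool) \<Rightarrow> (nat \<times> nat) set" where
  "arcs V adj = {(u, v). u \<in> V \<and> v \<in> V \<and> adj u v}"

definition gdeg :: "nat set \<Rightarrow> (nat \<Rightarrow> nat \<Rightarrow> bool) \<Rightarrow> nat \<Rightarrow> nat" where
  "gdeg V adj v = card {w \<in> V. adj v w}"

definition arc_walk_matrix :: "nat set \<Rightarrow> (nat \<Rightarrow> nat \<Rightarrow> bool) \<Rightarrow> complex mat" where
  "arc_walk_matrix V adj =
     (let L = sorted_list_of_set (arcs V adj) in
      mat (length L) (length L)
        (\<lambda>(i, j). if snd (L ! i) = fst (L ! j)
                  then 1 / of_nat (gdeg V adj (snd (L ! i))) else 0))"

definition kemeny :: "complex mat \<Rightarrow> complex" where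
  "kemeny P = (\<Sum>\<rho>\<in># proots (char_poly P) - {#1#}. 1 / (1 - \<rho>))"

definition kemeny_edge :: "nat set \<Rightarrow> (nat \<Rightarrow> nat \<Rightarrow> bool) \<Rightarrow> complex" where
  "kemeny_edge V adj = kemeny (arc_walk_matrix V adj)"

end

theory Submission
  imports Defs "Jordan_Normal_Form.Schur_Decomposition"
begin


lemma poly_eq_cofinite:
  fixes p q :: "complex poly"
  assumes F: "finite F" and h: "\<And>x. x \<notin> F \<Longrightarrow> poly p x = poly q x"
  shows "p = q"
proof (rule ccontr)
  assume "p \<noteq> q"
  hence "p - q \<noteq> 0" by simp
  hence fin: "finite {x. poly (p - q) x = 0}" by (rule poly_roots_finite)
  have "UNIV - F \<subseteq> {x. poly (p - q) x = 0}" using h by auto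
  hence "finite (UNIV - F :: complex set)" using fin finite_subset by blast
  hence "finite (UNIV :: complex set)" using F by (metis Diff_infinite_finite)
  thus False using infinite_UNIV_char_0 by blast
qed

lemma proots_linear_prod: "proots (\<Prod>e\<leftarrow>es. [:- e, 1:]) = mset (es :: complex list)"
proof (induction es)
  case Nil then show ?case by simp
next
  case (Cons e es)
  have nz: "(\<Prod>e\<leftarrow>es. [:- e, 1:]) \<noteq> (0::complex poly)"
    by (simp add: prod_list_zero_iff image_iff)
  have "proots ([:- e, 1:] * (\<Prod>e\<leftarrow>es. [:- e, 1:])) = proots [:- e, 1:] + proots (\<Prod>e\<leftarrow>es. [:- e, 1:])"
    by (rule proots_mult) (simp, rule nz)
  then show ?case by (simp only: list.map prod_list.Cons Cons.IH) simp
qed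

lemma upper_tri_inv_diag:
  fixes T W :: "'a::field mat"
  assumes T: "T \<in> carrier_mat N N" and W: "W \<in> carrier_mat N N"
    and ut: "upper_triangular T" and TW: "T * W = 1\<^sub>m N"
    and nz: "\<And>i. i < N \<Longrightarrow> T $$ (i,i) \<noteq> 0"
  shows "\<And>i. i < N \<Longrightarrow> T $$ (i,i) * W $$ (i,i) = 1"
proof -
  have Tz: "\<And>i j. j < i \<Longrightarrow> i < N \<Longrightarrow> T $$ (i,j) = 0"
    using ut T unfolding upper_triangular_def by auto
  have entry: "\<And>i j. i < N \<Longrightarrow> j < N \<Longrightarrow> (\<Sum>k<N. T $$ (i,k) * W $$ (k,j)) = (if i = j then 1 else 0)"
  proof -
    fix i j assume i: "i < N" and j: "j < N"
    have "(T * W) $$ (i,j) = (\<Sum>k<N. T $$ (i,k) * W $$ (k,j))"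
      using T W i j by (auto simp: scalar_prod_def atLeast0LessThan intro!: sum.cong)
    thus "(\<Sum>k<N. T $$ (i,k) * W $$ (k,j)) = (if i = j then 1 else 0)"
      using TW i j by simp
  qed
  have split: "\<And>i j. i < N \<Longrightarrow> (\<Sum>k<N. T $$ (i,k) * W $$ (k,j)) = T $$ (i,i) * W $$ (i,j) + (\<Sum>k\<in>{i<..<N}. T $$ (i,k) * W $$ (k,j))"
  proof -
    fix i j assume i: "i < N"
    have "{..<N} = {..<i} \<union> {i} \<union> {i<..<N}" using i by auto
    moreover have "(\<Sum>k\<in>{..<i} \<union> {i<..<N}. T $$ (i,k) * W $$ (k,j)) = (\<Sum>k\<in>{..<i}. T $$ (i,k) * W $$ (k,j)) + (\<Sum>k\<in>{i<..<N}. T $$ (i,k) * W $$ (k,j))"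
      by (rule sum.union_disjoint) auto
    ultimately have "(\<Sum>k<N. T $$ (i,k) * W $$ (k,j)) = (\<Sum>k\<in>{..<i}. T $$ (i,k) * W $$ (k,j)) + T $$ (i,i) * W $$ (i,j) + (\<Sum>k\<in>{i<..<N}. T $$ (i,k) * W $$ (k,j))"
      by (simp add: algebra_simps)
    moreover have "(\<Sum>k\<in>{..<i}. T $$ (i,k) * W $$ (k,j)) = 0" using Tz i by simp
    ultimately show "(\<Sum>k<N. T $$ (i,k) * W $$ (k,j)) = T $$ (i,i) * W $$ (i,j) + (\<Sum>k\<in>{i<..<N}. T $$ (i,k) * W $$ (k,j))" by simp
  qed
  have low: "\<And>d i j. N - i = d \<Longrightarrow> i < N \<Longrightarrow> j < i \<Longrightarrow> W $$ (i,j) = 0"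
  proof -
    fix d
    show "\<And>i j. N - i = d \<Longrightarrow> i < N \<Longrightarrow> j < i \<Longrightarrow> W $$ (i,j) = 0"
    proof (induction d rule: less_induct)
      case (less d i j)
      have "(\<Sum>k\<in>{i<..<N}. T $$ (i,k) * W $$ (k,j)) = 0"
      proof (rule sum.neutral, intro ballI)
        fix x assume "x \<in> {i<..<N}"
        then have "W $$ (x,j) = 0" using less.IH[of "N-x" x j] less.prems by auto
        then show "T $$ (i,x) * W $$ (x,j) = 0" by simp
      qed
      hence "T $$ (i,i) * W $$ (i,j) = 0" using entry[of i j] split[of i j] less by auto
      thus ?case using nz less by auto
    qed
  qed
  fix i assume i: "i < N"
  have "(\<Sum>k\<in>{i<..<N}. T $$ (i,k) * W $$ (k,i)) = 0"
    by (rule sum.neutral) (use low i in auto)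
  thus "T $$ (i,i) * W $$ (i,i) = 1" using entry[of i i] split[of i i] i by auto
qed



definition mtr :: "'a::comm_ring_1 mat \<Rightarrow> 'a" where
  "mtr A = (\<Sum>i<dim_row A. A $$ (i,i))"

lemma mtr_mult_comm:
  fixes A :: "'a::comm_ring_1 mat"
  assumes A: "A \<in> carrier_mat n m" and B: "B \<in> carrier_mat m n"
  shows "mtr (A*B) = mtr (B*A)"
proof -
  have "mtr (A*B) = (\<Sum>i<n. \<Sum>k<m. A $$ (i,k) * B $$ (k,i))"
    unfolding mtr_def using A B
    by (auto simp: scalar_prod_def atLeast0LessThan intro!: sum.cong)
  also have "\<dots> = (\<Sum>k<m. \<Sum>i<n. B $$ (k,i) * A $$ (i,k))"
    by (subst sum.swap) (simp add: mult.commute)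
  also have "\<dots> = mtr (B*A)"
    unfolding mtr_def using A B
    by (auto simp: scalar_prod_def atLeast0LessThan intro!: sum.cong)
  finally show ?thesis .
qed

lemma sylvester_det:
  fixes H :: "'a::idom mat"
  assumes H: "H \<in> carrier_mat N n" and C: "C \<in> carrier_mat n N"
  shows "det (1\<^sub>m N + H * C) = det (1\<^sub>m n + C * H)"
proof -
  define E where "E = four_block_mat (1\<^sub>m N) H (- C) (1\<^sub>m n)"
  have E1: "E * four_block_mat (1\<^sub>m N) (0\<^sub>m N n) C (1\<^sub>m n)
        = four_block_mat (1\<^sub>m N + H * C) H (0\<^sub>m n N) (1\<^sub>m n)"
    unfolding E_def using H C
    by (subst mult_four_block_mat[of _ N N _ n _ n]) (auto)
  have E2: "E * four_block_mat (1\<^sub>m N) (- H) (0\<^sub>m n N) (1\<^sub>m n)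
        = four_block_mat (1\<^sub>m N) (0\<^sub>m N n) (- C) (1\<^sub>m n + C * H)"
    unfolding E_def using H C
    by (subst mult_four_block_mat[of _ N N _ n _ n]) (auto)
  have Ec: "E \<in> carrier_mat (N+n) (N+n)" unfolding E_def using H C by auto
  have d1: "det (four_block_mat (1\<^sub>m N) (0\<^sub>m N n) C (1\<^sub>m n)) = 1"
    by (subst det_four_block_mat_upper_right_zero[of _ N _ n]) (use C in auto)
  have d2: "det (four_block_mat (1\<^sub>m N) (- H) (0\<^sub>m n N) (1\<^sub>m n)) = 1"
    by (subst det_four_block_mat_lower_left_zero[of _ N _ n]) (use H in auto)
  have "det E = det (1\<^sub>m N + H * C)"
    using arg_cong[OF E1, of det] det_mult[OF Ec, of "four_block_mat (1\<^sub>m N) (0\<^sub>m N n) C (1\<^sub>m n)"] d1 H C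
    by (subst (asm) det_four_block_mat_lower_left_zero[of _ N _ n]) auto
  moreover have "det E = det (1\<^sub>m n + C * H)"
    using arg_cong[OF E2, of det] det_mult[OF Ec, of "four_block_mat (1\<^sub>m N) (- H) (0\<^sub>m n N) (1\<^sub>m n)"] d2 H C
    by (subst (asm) det_four_block_mat_upper_right_zero[of _ N _ n]) auto
  ultimately show ?thesis by simp
qed

lemma cp_eval:
  fixes A :: "'a::field mat"
  assumes A: "A \<in> carrier_mat N N"
  shows "poly (char_poly A) y = det (mat N N (\<lambda>(i,j). (if i = j then y else 0) - A $$ (i,j)))"
proof -
  have "- (char_matrix A y) = mat N N (\<lambda>(i,j). (if i = j then y else 0) - A $$ (i,j))"
    by (rule eq_matI) (use A in \<open>auto simp: char_matrix_def\<close>)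
  thus ?thesis using char_poly_matrix[OF A] by simp
qed

lemma det_neg:
  fixes A :: "'a::comm_ring_1 mat"
  assumes A: "A \<in> carrier_mat N N"
  shows "det (mat N N (\<lambda>(i,j). - A $$ (i,j))) = (-1)^N * det A"
proof -
  have "mat N N (\<lambda>(i,j). - A $$ (i,j)) = (-1) \<cdot>\<^sub>m A"
    by (rule eq_matI) (use A in auto)
  thus ?thesis using det_smult[of "-1" A] A by simp
qed

lemma prod_list_remove1:
  fixes f :: "'b \<Rightarrow> 'a::comm_monoid_mult"
  shows "x \<in> set xs \<Longrightarrow> prod_list (map f xs) = f x * prod_list (map f (remove1 x xs))"
  by (induction xs) (auto simp: mult.left_commute)

lemma neg_prod_list:
  fixes es :: "complex list"
  shows "(-1)^length es * (\<Prod>e\<leftarrow>es. y - e) = (\<Prod>e\<leftarrow>es. e - y)"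
  by (induction es) (auto simp: algebra_simps)



theorem kemeny_certificate:
  fixes P X :: "complex mat" and \<pi> :: "nat \<Rightarrow> complex"
  assumes P: "P \<in> carrier_mat N N" and X: "X \<in> carrier_mat N N"
    and rs: "\<And>i. i < N \<Longrightarrow> (\<Sum>j<N. P $$ (i,j)) = 1"
    and ps: "(\<Sum>i<N. \<pi> i) = 1"
    and XX: "\<And>i j. i < N \<Longrightarrow> j < N \<Longrightarrow>
               X $$ (i,j) - (\<Sum>k<N. P $$ (i,k) * X $$ (k,j)) = (if i = j then 1 else 0) - \<pi> j"
  shows "kemeny P = mtr X - (\<Sum>i<N. \<Sum>j<N. \<pi> i * X $$ (i,j))"
proof -
  define B where "B = mat N N (\<lambda>(i,j). (if i = j then 1 else 0) - P $$ (i,j) + \<pi> j)"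
  define cc where "cc j = \<pi> j - (\<Sum>l<N. \<pi> l * X $$ (l,j))" for j
  define Z where "Z = mat N N (\<lambda>(i,j). X $$ (i,j) + cc j)"
  have Bc: "B \<in> carrier_mat N N" and Zc: "Z \<in> carrier_mat N N" unfolding B_def Z_def by auto
  have multE: "\<And>A C i j. A \<in> carrier_mat N N \<Longrightarrow> C \<in> carrier_mat N N \<Longrightarrow> i < N \<Longrightarrow> j < N \<Longrightarrow>
      (A * C) $$ (i,j) = (\<Sum>k<N. A $$ (i,k) * C $$ (k,j))"
    by (auto simp: scalar_prod_def atLeast0LessThan intro!: sum.cong)
  have BZ: "B * Z = 1\<^sub>m N"
  proof (rule eq_matI)
    fix i j assume i: "i < dim_row (1\<^sub>m N :: complex mat)" and j: "j < dim_col (1\<^sub>m N :: complex mat)"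
    hence i: "i < N" and j: "j < N" by auto
    have "(B * Z) $$ (i,j) = (\<Sum>k<N. ((if i = k then 1 else 0) - P $$ (i,k) + \<pi> k) * (X $$ (k,j) + cc j))"
      using multE[OF Bc Zc i j] i j unfolding B_def Z_def by auto
    also have "\<dots> = (\<Sum>k<N. (if i = k then 1 else 0) * (X $$ (k,j) + cc j)) - (\<Sum>k<N. P $$ (i,k) * X $$ (k,j))
        - cc j * (\<Sum>k<N. P $$ (i,k)) + (\<Sum>k<N. \<pi> k * X $$ (k,j)) + cc j * (\<Sum>k<N. \<pi> k)"
      by (simp add: algebra_simps sum.distrib sum_subtractf sum_distrib_left)
    also have "(\<Sum>k<N. (if i = k then 1 else 0) * (X $$ (k,j) + cc j)) = X $$ (i,j) + cc j"
    proof -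
      have "(\<Sum>k<N. (if i = k then 1 else 0) * (X $$ (k,j) + cc j)) = (\<Sum>k<N. (if i = k then X $$ (k,j) + cc j else 0))"
        by (rule sum.cong) auto
      thus ?thesis using i by (simp add: sum.delta)
    qed
    also have "X $$ (i,j) + cc j - (\<Sum>k<N. P $$ (i,k) * X $$ (k,j)) - cc j * (\<Sum>k<N. P $$ (i,k)) + (\<Sum>k<N. \<pi> k * X $$ (k,j)) + cc j * (\<Sum>k<N. \<pi> k) = (if i = j then 1 else 0)"
      using XX[OF i j] rs[OF i] ps i unfolding cc_def by (simp add: algebra_simps)
    finally show "(B * Z) $$ (i,j) = 1\<^sub>m N $$ (i,j)" using i j by simp
  qed (auto simp: B_def Z_def)
  have detB: "det B \<noteq> 0"
  proof
    assume "det B = 0"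
    hence "det (B * Z) = 0" using det_mult[OF Bc Zc] by simp
    thus False using BZ by simp
  qed
  obtain es where es: "char_poly P = (\<Prod>e\<leftarrow>es. [:- e, 1:])" and les: "length es = N"
    using char_poly_factorized[OF P] by blast
  define pB where "pB = char_poly B"
  have key: "poly pB x * x = (x - 1) * (\<Prod>e\<leftarrow>es. x - (1 - e))" if x1: "x \<noteq> 1" for x
  proof -
    define A where "A = mat N N (\<lambda>(i,j). (if i=j then x else 0) - (if i = j then 1 else 0) + P $$ (i,j))"
    define AU where "AU = mat N N (\<lambda>(i,j). (if i=j then x else 0) - B $$ (i,j))"
    define \<alpha> where "\<alpha> = 1 / (x - 1)"
    define E1 where "E1 = mat N N (\<lambda>(i,j). (if i=j then 1 else 0) + \<alpha> * \<pi> j)"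
    have Ac: "A \<in> carrier_mat N N" and AUc: "AU \<in> carrier_mat N N" and E1c: "E1 \<in> carrier_mat N N"
      unfolding A_def AU_def E1_def by auto
    have rowA: "(\<Sum>k<N. A $$ (i,k)) = x" if i: "i < N" for i
    proof -
      have "(\<Sum>k<N. A $$ (i,k)) = (\<Sum>k<N. (if i = k then x - 1 else 0) + P $$ (i,k))"
        by (rule sum.cong) (use i in \<open>auto simp: A_def\<close>)
      also have "\<dots> = x - 1 + 1" using i rs[OF i] by (simp add: sum.distrib sum.delta)
      finally show ?thesis by simp
    qed
    have AUE: "AU * E1 = A"
    proof (rule eq_matI)
      fix i j assume "i < dim_row A" "j < dim_col A"
      hence i: "i < N" and j: "j < N" by (auto simp: A_def)
      have "(AU * E1) $$ (i,j) = (\<Sum>k<N. (A $$ (i,k) - \<pi> k) * ((if k=j then 1 else 0) + \<alpha> * \<pi> j))"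
        using multE[OF AUc E1c i j] i j by (auto simp: AU_def E1_def A_def B_def intro!: sum.cong)
      also have "\<dots> = (\<Sum>k<N. (if k=j then A $$ (i,k) - \<pi> k else 0) + \<alpha> * \<pi> j * (A $$ (i,k) - \<pi> k))"
        by (rule sum.cong) (auto simp: algebra_simps)
      also have "\<dots> = (\<Sum>k<N. (if k=j then A $$ (i,k) - \<pi> k else 0)) + \<alpha> * \<pi> j * ((\<Sum>k<N. A $$ (i,k)) - (\<Sum>k<N. \<pi> k))"
        by (simp add: sum.distrib sum_subtractf[symmetric] sum_distrib_left[symmetric])
      also have "\<dots> = A $$ (i,j) - \<pi> j + \<alpha> * \<pi> j * (x - 1)"
        using j rowA[OF i] ps by (simp add: sum.delta')
      also have "\<dots> = A $$ (i,j)" using x1 unfolding \<alpha>_def by simp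
      finally show "(AU * E1) $$ (i,j) = A $$ (i,j)" .
    qed (auto simp: A_def AU_def E1_def)
    have detE1: "det E1 = 1 + \<alpha>"
    proof -
      define H where "H = mat N 1 (\<lambda>_. \<alpha>)"
      define C where "C = mat 1 N (\<lambda>(_,j). \<pi> j)"
      have Hc: "H \<in> carrier_mat N 1" and Cc: "C \<in> carrier_mat 1 N" unfolding H_def C_def by auto
      have "E1 = 1\<^sub>m N + H * C"
        by (rule eq_matI) (auto simp: E1_def H_def C_def scalar_prod_def)
      moreover have "1\<^sub>m 1 + C * H = mat 1 1 (\<lambda>_. 1 + \<alpha>)"
        by (rule eq_matI) (auto simp: H_def C_def scalar_prod_def atLeast0LessThan ps sum_distrib_right[symmetric])
      ultimately have "det E1 = det (mat 1 1 (\<lambda>_. 1 + \<alpha>) :: complex mat)"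
        using sylvester_det[OF Hc Cc] by simp
      thus ?thesis by (simp add: det_single)
    qed
    have detA: "det A = (\<Prod>e\<leftarrow>es. x - (1 - e))"
    proof -
      define A' where "A' = mat N N (\<lambda>(i,j). (if i=j then 1 - x else 0) - P $$ (i,j))"
      have A'c: "A' \<in> carrier_mat N N" unfolding A'_def by auto
      have "A = mat N N (\<lambda>(i,j). - A' $$ (i,j))"
        by (rule eq_matI) (auto simp: A_def A'_def)
      hence "det A = (-1)^N * det A'" using det_neg[OF A'c] by simp
      also have "det A' = poly (char_poly P) (1 - x)" unfolding A'_def using cp_eval[OF P] by simp
      also have "\<dots> = (\<Prod>e\<leftarrow>es. (1 - x) - e)" unfolding es by (simp add: poly_prod_list o_def)
      also have "(-1)^N * \<dots> = (\<Prod>e\<leftarrow>es. e - (1 - x))" using neg_prod_list[of es "1 - x"] les by simp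
      also have "\<dots> = (\<Prod>e\<leftarrow>es. x - (1 - e))" by (rule arg_cong[where f=prod_list], rule map_cong) auto
      finally show ?thesis .
    qed
    have "poly pB x = det AU" unfolding pB_def AU_def using cp_eval[OF Bc] by simp
    hence "poly pB x * (1 + \<alpha>) = (\<Prod>e\<leftarrow>es. x - (1 - e))"
      using det_mult[OF AUc E1c] AUE detE1 detA by simp
    moreover have "1 + \<alpha> = x / (x - 1)" using x1 unfolding \<alpha>_def by (simp add: field_simps)
    ultimately show ?thesis using x1 by (simp add: field_simps)
  qed
  have pBpoly: "pB * [:0,1:] = [:-1,1:] * (\<Prod>e\<leftarrow>es. [:-(1-e),1:])"
  proof (rule poly_eq_cofinite[of "{1}"])
    fix x :: complex assume "x \<notin> {1}"
    hence "x \<noteq> 1" by simp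
    from key[OF this] show "poly (pB * [:0,1:]) x = poly ([:-1,1:] * (\<Prod>e\<leftarrow>es. [:-(1-e),1:])) x"
      by (simp add: poly_prod_list o_def algebra_simps)
  qed simp
  have p0: "poly pB 0 \<noteq> 0"
  proof -
    have "poly pB 0 = det (mat N N (\<lambda>(i,j). - B $$ (i,j)))"
      unfolding pB_def using cp_eval[OF Bc, of 0] by simp
    also have "\<dots> = (-1)^N * det B" by (rule det_neg[OF Bc])
    finally show ?thesis using detB by simp
  qed
  have "(\<Prod>e\<leftarrow>es. 0 - (1 - e)) = 0" using key[of 0] by simp
  hence one_in: "1 \<in> set es" by (force simp: prod_list_zero_iff)
  define es' where "es' = remove1 1 es"
  define Q' where "Q' = (\<Prod>e\<leftarrow>es'. [:-(1-e),1::complex:])"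
  have "(\<Prod>e\<leftarrow>es. [:-(1-e),1::complex:]) = [:0,1:] * Q'"
    unfolding Q'_def es'_def using prod_list_remove1[OF one_in, of "\<lambda>e. [:-(1-e),1::complex:]"] by simp
  hence "pB * [:0,1:] = ([:-1,1:] * Q') * [:0,1:]" using pBpoly by (simp add: ac_simps)
  hence pBeq: "pB = [:-1,1:] * Q'" by (simp add: mult_right_cancel)
  define fs where "fs = 1 # map (\<lambda>e. 1 - e) es'"
  have cpB: "char_poly B = (\<Prod>f\<leftarrow>fs. [:-f,1:])"
    unfolding pB_def[symmetric] pBeq Q'_def fs_def by (simp add: o_def)
  have fs_nz: "0 \<notin> set fs"
  proof
    assume "0 \<in> set fs"
    hence "(\<Prod>f\<leftarrow>fs. 0 - f) = 0" by (simp add: prod_list_zero_iff)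
    moreover have "poly pB 0 = (\<Prod>f\<leftarrow>fs. 0 - f)"
      unfolding pB_def cpB by (simp add: poly_prod_list o_def)
    ultimately show False using p0 by simp
  qed
  obtain T S S' where sch: "schur_decomposition B fs = (T,S,S')" by (metis prod_cases3)
  from schur_decomposition[OF Bc cpB sch]
  have sw: "similar_mat_wit B T S S'" and ut: "upper_triangular T" and dT: "diag_mat T = fs" by auto
  from sw have Tc: "T \<in> carrier_mat N N" and Sc: "S \<in> carrier_mat N N" and S'c: "S' \<in> carrier_mat N N"
    and SS': "S * S' = 1\<^sub>m N" and S'S: "S' * S = 1\<^sub>m N" and BST: "B = S * T * S'"
    unfolding similar_mat_wit_def Let_def using Bc by auto
  define W where "W = S' * Z * S"
  have Wc: "W \<in> carrier_mat N N" unfolding W_def using S'c Zc Sc by auto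
  have S'B: "S' * B = T * S'"
  proof -
    have "S' * B = S' * (S * T * S')" using BST by simp
    also have "\<dots> = (S' * S) * T * S'"
      using S'c Sc Tc by (simp add: assoc_mult_mat[of _ N N _ N _ N])
    finally show ?thesis using S'S Tc S'c by simp
  qed
  have TW: "T * W = 1\<^sub>m N"
  proof -
    have "T * W = (T * S') * Z * S"
      unfolding W_def using S'c Sc Tc Zc by (simp add: assoc_mult_mat[of _ N N _ N _ N])
    also have "\<dots> = S' * (B * Z) * S"
      unfolding S'B[symmetric] using S'c Sc Bc Zc by (simp add: assoc_mult_mat[of _ N N _ N _ N])
    finally show ?thesis using BZ S'S S'c by simp
  qed
  have lfs: "length fs = N" using dT Tc unfolding diag_mat_def by auto
  have Tii: "T $$ (i,i) = fs ! i" if "i < N" for i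
    using dT Tc that unfolding diag_mat_def by auto
  have Wii: "W $$ (i,i) = 1 / fs ! i" if i: "i < N" for i
  proof -
    have nz: "\<And>i. i < N \<Longrightarrow> T $$ (i,i) \<noteq> 0" using Tii fs_nz lfs by (metis nth_mem)
    have "T $$ (i,i) * W $$ (i,i) = 1" by (rule upper_tri_inv_diag[OF Tc Wc ut TW nz i])
    thus ?thesis using Tii[OF i] nz[OF i] by (simp add: field_simps)
  qed
  have ZW: "Z = S * W * S'"
  proof -
    have "S * W * S' = (S * S') * Z * (S * S')"
      unfolding W_def using S'c Sc Zc by (simp add: assoc_mult_mat[of _ N N _ N _ N])
    thus ?thesis using SS' Zc by simp
  qed
  have "mtr Z = mtr (S' * (S * W))"
    unfolding ZW by (rule mtr_mult_comm[of _ N N]) (use Sc Wc S'c in auto)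
  also have "\<dots> = mtr W"
    using S'c Sc Wc S'S by (simp add: assoc_mult_mat[of _ N N _ N _ N, symmetric])
  also have "\<dots> = (\<Sum>i<N. 1 / fs ! i)" unfolding mtr_def using Wc Wii by simp
  also have "\<dots> = sum_list (map (\<lambda>f. 1 / f) fs)"
    by (simp add: sum_list_sum_nth lfs atLeast0LessThan)
  also have "\<dots> = 1 + sum_list (map (\<lambda>e. 1 / (1 - e)) es')"
    unfolding fs_def by (simp add: o_def)
  finally have mZ1: "mtr Z = 1 + sum_list (map (\<lambda>e. 1 / (1 - e)) es')" .
  have kP: "kemeny P = sum_list (map (\<lambda>e. 1 / (1 - e)) es')"
    unfolding kemeny_def es proots_linear_prod es'_def
    by (simp add: sum_mset_sum_list[symmetric] mset_map)
  have mZ2: "mtr Z = mtr X + 1 - (\<Sum>i<N. \<Sum>j<N. \<pi> i * X $$ (i,j))"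
  proof -
    have "mtr Z = (\<Sum>i<N. X $$ (i,i) + (\<pi> i - (\<Sum>l<N. \<pi> l * X $$ (l,i))))"
      unfolding mtr_def Z_def cc_def by simp
    also have "\<dots> = mtr X + 1 - (\<Sum>i<N. \<Sum>l<N. \<pi> l * X $$ (l,i))"
      unfolding mtr_def using X ps by (simp add: sum.distrib sum_subtractf)
    also have "(\<Sum>i<N. \<Sum>l<N. \<pi> l * X $$ (l,i)) = (\<Sum>i<N. \<Sum>j<N. \<pi> i * X $$ (i,j))"
      by (rule sum.swap)
    finally show ?thesis .
  qed
  show ?thesis using mZ1 mZ2 kP by simp
qed


locale cbg =
  fixes a b k :: nat
  assumes a3: "a \<ge> 3" and b3: "b \<ge> 3" and k2: "k \<ge> 2"
begin

definition "n = a + b + k - 2"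
definition "c = a + k - 2"
definition "sa i = (if Suc i = a then 0 else Suc i)"
definition "pa i = (if i = 0 then a - 1 else i - 1)"
definition "sb i = (if Suc i = b then 0 else Suc i)"
definition "pb i = (if i = 0 then b - 1 else i - 1)"
abbreviation "pv \<equiv> cb_path_vertex a"
abbreviation "adj \<equiv> cb_adj k a b"
definition "AR = arcs {..<n} adj"

definition "FA = (\<lambda>i. (i, sa i)) ` {..<a}"
definition "RA = (\<lambda>i. (sa i, i)) ` {..<a}"
definition "FP = (\<lambda>j. (pv j, pv (Suc j))) ` {..<k-1}"
definition "RP = (\<lambda>j. (pv (Suc j), pv j)) ` {..<k-1}"
definition "FB = (\<lambda>i. (c + i, c + sb i)) ` {..<b}"
definition "RB = (\<lambda>i. (c + sb i, c + i)) ` {..<b}"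

lemma mod_a: "i < a \<Longrightarrow> (i + 1) mod a = sa i"
  unfolding sa_def by (auto simp: mod_if)
lemma mod_b: "i < b \<Longrightarrow> (i + 1) mod b = sb i"
  unfolding sb_def by (auto simp: mod_if)

lemma edge_dir_iff: "cb_edge_dir k a b u v \<longleftrightarrow> (u, v) \<in> FA \<union> FP \<union> FB"
proof -
  have "(\<exists>i<a. u = i \<and> v = (i + 1) mod a) \<longleftrightarrow> (u,v) \<in> FA"
    unfolding FA_def using mod_a by auto
  moreover have "(\<exists>j. j + 1 < k \<and> u = pv j \<and> v = pv (j + 1)) \<longleftrightarrow> (u,v) \<in> FP"
    unfolding FP_def by (auto simp: less_diff_conv)
  moreover have "(\<exists>i<b. u = a + k - 2 + i \<and> v = a + k - 2 + (i + 1) mod b) \<longleftrightarrow> (u,v) \<in> FB"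
    unfolding FB_def c_def using mod_b by auto
  ultimately show ?thesis unfolding cb_edge_dir_def by blast
qed

lemma sa_lt: "i < a \<Longrightarrow> sa i < a" unfolding sa_def using a3 by auto
lemma sb_lt: "i < b \<Longrightarrow> sb i < b" unfolding sb_def using b3 by auto
lemma pv_le: "j < k \<Longrightarrow> pv j \<le> c" unfolding cb_path_vertex_def c_def by auto
lemma c_lt: "c < n" unfolding c_def n_def using b3 by auto
lemma pv_lt: "j < k \<Longrightarrow> pv j < n" using pv_le c_lt by (meson le_less_trans)

lemma fams_in: "FA \<union> RA \<union> FP \<union> RP \<union> FB \<union> RB \<subseteq> {..<n} \<times> {..<n}"
proof -
  have "a \<le> n" "c + b = n" unfolding n_def c_def using k2 by auto
  hence "FA \<subseteq> {..<n} \<times> {..<n}" "RA \<subseteq> {..<n} \<times> {..<n}"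
     "FP \<subseteq> {..<n} \<times> {..<n}" "RP \<subseteq> {..<n} \<times> {..<n}"
     "FB \<subseteq> {..<n} \<times> {..<n}" "RB \<subseteq> {..<n} \<times> {..<n}"
    unfolding FA_def RA_def FP_def RP_def FB_def RB_def
    using sa_lt sb_lt pv_le c_lt by (auto intro!: image_subsetI dest: sa_lt sb_lt simp: less_diff_conv pv_lt)
  thus ?thesis by blast
qed

lemma AR_eq: "AR = FA \<union> RA \<union> FP \<union> RP \<union> FB \<union> RB"
proof -
  have sw: "\<And>u v. (v,u) \<in> FA \<longleftrightarrow> (u,v) \<in> RA" "\<And>u v. (v,u) \<in> FP \<longleftrightarrow> (u,v) \<in> RP"
     "\<And>u v. (v,u) \<in> FB \<longleftrightarrow> (u,v) \<in> RB"
    unfolding FA_def RA_def FP_def RP_def FB_def RB_def by auto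
  have "AR = {p. fst p < n \<and> snd p < n \<and> (p \<in> FA \<union> FP \<union> FB \<or> (snd p, fst p) \<in> FA \<union> FP \<union> FB)}"
    unfolding AR_def arcs_def cb_adj_def edge_dir_iff by auto
  also have "\<dots> = {p. fst p < n \<and> snd p < n \<and> p \<in> FA \<union> RA \<union> FP \<union> RP \<union> FB \<union> RB}"
    using sw by auto
  also have "\<dots> = FA \<union> RA \<union> FP \<union> RP \<union> FB \<union> RB" using fams_in by auto
  finally show ?thesis .
qed

lemma pv_inj: "pv x = pv y \<Longrightarrow> x = y"
  unfolding cb_path_vertex_def using a3 by (auto split: if_splits)

lemma c_ge_a: "a \<le> c" unfolding c_def using k2 by auto

lemma inA: "p \<in> FA \<union> RA \<Longrightarrow> fst p < a \<and> snd p < a"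
  unfolding FA_def RA_def using sa_lt by auto
lemma inB: "p \<in> FB \<union> RB \<Longrightarrow> fst p \<ge> c \<and> snd p \<ge> c"
  unfolding FB_def RB_def by auto
lemma inP: "p \<in> FP \<union> RP \<Longrightarrow> max (fst p) (snd p) \<ge> a \<and> min (fst p) (snd p) < c"
  unfolding FP_def RP_def cb_path_vertex_def c_def using a3 by (auto simp: less_diff_conv)

lemma disj_AA: "FA \<inter> RA = {}"
  unfolding FA_def RA_def sa_def using a3 by (auto split: if_splits)
lemma disj_BB: "FB \<inter> RB = {}"
  unfolding FB_def RB_def sb_def using b3 by (auto split: if_splits)
lemma disj_PP: "FP \<inter> RP = {}"
proof -
  { fix x y assume "pv x = pv (Suc y)" "pv (Suc x) = pv y"
    hence "x = Suc y" "Suc x = y" using pv_inj by blast+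
    hence False by simp }
  thus ?thesis unfolding FP_def RP_def by auto
qed

lemma disj_AP: "(FA \<union> RA) \<inter> (FP \<union> RP) = {}"
proof -
  { fix p assume "p \<in> FA \<union> RA" "p \<in> FP \<union> RP"
    from inA[OF this(1)] inP[OF this(2)] have False by (simp add: max_def split: if_splits) }
  thus ?thesis by blast
qed
lemma disj_AB: "(FA \<union> RA) \<inter> (FB \<union> RB) = {}"
proof -
  { fix p assume "p \<in> FA \<union> RA" "p \<in> FB \<union> RB"
    from inA[OF this(1)] inB[OF this(2)] c_ge_a have False by simp }
  thus ?thesis by blast
qed
lemma disj_PB: "(FP \<union> RP) \<inter> (FB \<union> RB) = {}"
proof -
  { fix p assume "p \<in> FP \<union> RP" "p \<in> FB \<union> RB"
    from inP[OF this(1)] inB[OF this(2)] have False by (simp add: min_def split: if_splits) }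
  thus ?thesis by blast
qed

lemma fin_fams: "finite FA" "finite RA" "finite FP" "finite RP" "finite FB" "finite RB"
  unfolding FA_def RA_def FP_def RP_def FB_def RB_def by auto

lemma sum_AR:
  fixes F :: "nat \<times> nat \<Rightarrow> 'x::comm_monoid_add"
  shows "sum F AR = (\<Sum>i<a. F (i, sa i)) + (\<Sum>i<a. F (sa i, i))
     + (\<Sum>j<k-1. F (pv j, pv (Suc j))) + (\<Sum>j<k-1. F (pv (Suc j), pv j))
     + (\<Sum>i<b. F (c+i, c+sb i)) + (\<Sum>i<b. F (c + sb i, c + i))"
proof -
  have "sum F AR = sum F (FA \<union> RA) + sum F (FP \<union> RP) + sum F (FB \<union> RB)"
  proof -
    have "AR = ((FA \<union> RA) \<union> (FP \<union> RP)) \<union> (FB \<union> RB)" unfolding AR_eq by auto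
    moreover have "sum F (((FA \<union> RA) \<union> (FP \<union> RP)) \<union> (FB \<union> RB)) = sum F ((FA \<union> RA) \<union> (FP \<union> RP)) + sum F (FB \<union> RB)"
      by (rule sum.union_disjoint) (use fin_fams disj_AB disj_PB in auto)
    moreover have "sum F ((FA \<union> RA) \<union> (FP \<union> RP)) = sum F (FA \<union> RA) + sum F (FP \<union> RP)"
      by (rule sum.union_disjoint) (use fin_fams disj_AP in auto)
    ultimately show ?thesis by simp
  qed
  moreover have "sum F (FA \<union> RA) = sum F FA + sum F RA"
    by (rule sum.union_disjoint) (use fin_fams disj_AA in auto)
  moreover have "sum F (FP \<union> RP) = sum F FP + sum F RP"
    by (rule sum.union_disjoint) (use fin_fams disj_PP in auto)
  moreover have "sum F (FB \<union> RB) = sum F FB + sum F RB"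
    by (rule sum.union_disjoint) (use fin_fams disj_BB in auto)
  moreover have "sum F FA = (\<Sum>i<a. F (i, sa i))"
    unfolding FA_def by (subst sum.reindex) (auto simp: inj_on_def)
  moreover have "sum F RA = (\<Sum>i<a. F (sa i, i))"
    unfolding RA_def by (subst sum.reindex) (auto simp: inj_on_def)
  moreover have "sum F FP = (\<Sum>j<k-1. F (pv j, pv (Suc j)))"
    unfolding FP_def by (subst sum.reindex) (auto simp: inj_on_def dest: pv_inj)
  moreover have "sum F RP = (\<Sum>j<k-1. F (pv (Suc j), pv j))"
    unfolding RP_def by (subst sum.reindex) (auto simp: inj_on_def dest: pv_inj)
  moreover have "sum F FB = (\<Sum>i<b. F (c+i, c+sb i))"
    unfolding FB_def by (subst sum.reindex) (auto simp: inj_on_def)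
  moreover have "sum F RB = (\<Sum>i<b. F (c + sb i, c + i))"
    unfolding RB_def by (subst sum.reindex) (auto simp: inj_on_def)
  ultimately show ?thesis by (simp add: add.assoc)
qed

end


context cbg begin

definition "pidx w = (if w = 0 then 0 else w + 1 - a)"

lemma cbn: "c + b = n" unfolding c_def n_def using k2 by auto

lemma sumA_f: "(\<Sum>i<a. if i = w then h (i, sa i) else 0) = (if w < a then h (w, sa w) else (0::'x::comm_monoid_add))"
  by (simp add: sum.delta')
lemma sumA_r: "(\<Sum>i<a. if sa i = w then h (sa i, i) else 0) = (if w < a then h (w, pa w) else (0::'x::comm_monoid_add))"
proof -
  have "(\<Sum>i<a. if sa i = w then h (sa i, i) else 0) = (\<Sum>i<a. if i = pa w \<and> w < a then h (w, pa w) else 0)"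
    by (rule sum.cong) (use a3 in \<open>auto simp: sa_def pa_def split: if_splits\<close>)
  also have "\<dots> = (if w < a then h (w, pa w) else 0)"
    using a3 by (auto simp: sum.delta' pa_def)
  finally show ?thesis .
qed
lemma sumB_f: "(\<Sum>i<b. if c + i = w then h (c + i, c + sb i) else 0) = (if c \<le> w \<and> w < n then h (w, c + sb (w - c)) else (0::'x::comm_monoid_add))"
proof -
  have "(\<Sum>i<b. if c + i = w then h (c + i, c + sb i) else 0) = (\<Sum>i<b. if i = w - c \<and> c \<le> w then h (w, c + sb (w - c)) else 0)"
    by (rule sum.cong) auto
  also have "\<dots> = (if c \<le> w \<and> w < n then h (w, c + sb (w - c)) else 0)"
    using cbn by (auto simp: sum.delta')
  finally show ?thesis .
qed
lemma sumB_r: "(\<Sum>i<b. if c + sb i = w then h (c + sb i, c + i) else 0) = (if c \<le> w \<and> w < n then h (w, c + pb (w - c)) else (0::'x::comm_monoid_add))"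
proof -
  have "(\<Sum>i<b. if c + sb i = w then h (c + sb i, c + i) else 0) = (\<Sum>i<b. if i = pb (w - c) \<and> c \<le> w \<and> w < n then h (w, c + pb (w - c)) else 0)"
    by (rule sum.cong) (use b3 cbn in \<open>auto simp: sb_def pb_def split: if_splits\<close>)
  also have "\<dots> = (if c \<le> w \<and> w < n then h (w, c + pb (w - c)) else 0)"
    using b3 cbn by (auto simp: sum.delta' pb_def)
  finally show ?thesis .
qed
lemma sumP_f: "(\<Sum>j<k-1. if pv j = w then h (pv j, pv (Suc j)) else 0) = (if w = 0 \<or> (a \<le> w \<and> w < c) then h (w, pv (Suc (pidx w))) else (0::'x::comm_monoid_add))"
proof -
  have "(\<Sum>j<k-1. if pv j = w then h (pv j, pv (Suc j)) else 0) = (\<Sum>j<k-1. if j = pidx w \<and> (w = 0 \<or> (a \<le> w \<and> w < c)) then h (w, pv (Suc (pidx w))) else 0)"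
    by (rule sum.cong) (use a3 in \<open>auto simp: cb_path_vertex_def pidx_def c_def split: if_splits\<close>)
  also have "\<dots> = (if w = 0 \<or> (a \<le> w \<and> w < c) then h (w, pv (Suc (pidx w))) else 0)"
    using k2 by (auto simp: sum.delta' pidx_def c_def)
  finally show ?thesis .
qed
lemma sumP_r: "(\<Sum>j<k-1. if pv (Suc j) = w then h (pv (Suc j), pv j) else 0) = (if a \<le> w \<and> w \<le> c then h (w, pv (w - a)) else (0::'x::comm_monoid_add))"
proof -
  have "(\<Sum>j<k-1. if pv (Suc j) = w then h (pv (Suc j), pv j) else 0) = (\<Sum>j<k-1. if j = w - a \<and> a \<le> w \<and> w \<le> c then h (w, pv (w - a)) else 0)"
    by (rule sum.cong) (use a3 in \<open>auto simp: cb_path_vertex_def c_def split: if_splits\<close>)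
  also have "\<dots> = (if a \<le> w \<and> w \<le> c then h (w, pv (w - a)) else 0)"
    using k2 by (auto simp: sum.delta' c_def)
  finally show ?thesis .
qed

lemma sum_tail:
  "(\<Sum>e\<in>AR. if fst e = w then h e else (0::'x::comm_monoid_add)) =
     (if w < a then h (w, sa w) + h (w, pa w) else 0)
   + (if w = 0 \<or> (a \<le> w \<and> w < c) then h (w, pv (Suc (pidx w))) else 0)
   + (if a \<le> w \<and> w \<le> c then h (w, pv (w - a)) else 0)
   + (if c \<le> w \<and> w < n then h (w, c + sb (w - c)) + h (w, c + pb (w - c)) else 0)"
  unfolding sum_AR[of "\<lambda>e. if fst e = w then h e else 0"]
  apply (simp only: fst_conv)
  apply (simp only: sumA_f sumA_r sumB_f sumB_r sumP_f sumP_r)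
  by (simp add: ac_simps)

lemma sum_swap_AR: "(\<Sum>e\<in>AR. g (snd e, fst e)) = (\<Sum>e\<in>AR. (g e :: 'x::comm_monoid_add))"
  unfolding sum_AR[of "\<lambda>e. g (snd e, fst e)"] sum_AR[of g] by (simp add: ac_simps)

definition "dg w = (if w = 0 \<or> w = c then 3 else (2::nat))"

lemma deg_eq: assumes w: "w < n" shows "gdeg {..<n} adj w = dg w"
proof -
  have fin: "finite AR" unfolding AR_eq using fin_fams by auto
  have "{z \<in> {..<n}. adj w z} = snd ` {e \<in> AR. fst e = w}"
    unfolding AR_def arcs_def using w by force
  moreover have "inj_on snd {e \<in> AR. fst e = w}" by (auto simp: inj_on_def)
  ultimately have "gdeg {..<n} adj w = card {e \<in> AR. fst e = w}"
    unfolding gdeg_def by (simp add: card_image)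
  also have "\<dots> = (\<Sum>e\<in>AR. if fst e = w then 1 else 0)"
    using fin by (simp add: sum.inter_filter[symmetric])
  also have "\<dots> = dg w"
    unfolding sum_tail using w a3 k2 c_ge_a by (auto simp: dg_def c_def)
  finally show ?thesis .
qed

end


definition cyc :: "nat \<Rightarrow> nat \<Rightarrow> nat \<Rightarrow> real" where
  "cyc m p q = real (min p q) * (real m - real (max p q)) / real m"

lemma cyc_0[simp]: "cyc m 0 q = 0" "cyc m p 0 = 0" unfolding cyc_def by auto

lemma cyc_lap:
  assumes m: "m \<ge> 3" and w: "w < m" and q: "q < m"
  shows "2 * cyc m w q - cyc m (if Suc w = m then 0 else Suc w) q - cyc m (if w = 0 then m - 1 else w - 1) q
       = (if w = q then 1 else 0) - (if w = 0 then 1 else 0)"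
proof -
  have mpos: "real m > 0" using m by simp
  consider "w = 0" | "0 < w" "Suc w = m" | "0 < w" "Suc w < m" using w by linarith
  thus ?thesis
  proof cases
    case 1
    have s: "(if Suc w = m then 0 else Suc w) = 1" using 1 m by auto
    have p: "(if w = 0 then m - 1 else w - 1) = m - 1" using 1 by auto
    consider "q = 0" | "q = m - 1" | "0 < q" "q < m - 1" using q by linarith
    thus ?thesis
    proof cases
      case 1 then show ?thesis unfolding s p using \<open>w = 0\<close> by simp
    next
      case 2 then show ?thesis unfolding s p using \<open>w = 0\<close> m mpos
        by (auto simp: cyc_def min_def max_def of_nat_diff field_simps)
    next
      case 3 then show ?thesis unfolding s p using \<open>w = 0\<close> m mpos
        by (auto simp: cyc_def min_def max_def of_nat_diff field_simps)
    qed
  next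
    case 2
    have s: "(if Suc w = m then 0 else Suc w) = 0" using 2 by auto
    have p: "(if w = 0 then m - 1 else w - 1) = m - 2" using 2 by auto
    have wm: "w = m - 1" using 2 by auto
    consider "q = m - 1" | "q = m - 2" | "q < m - 2" using q by linarith
    thus ?thesis
    proof cases
      case 1 then show ?thesis unfolding s p wm using m mpos
        by (auto simp: cyc_def min_def max_def of_nat_diff field_simps)
    next
      case 2 then show ?thesis unfolding s p wm using m mpos
        by (auto simp: cyc_def min_def max_def of_nat_diff field_simps)
    next
      case 3 then show ?thesis unfolding s p wm using m mpos
        by (auto simp: cyc_def min_def max_def of_nat_diff field_simps)
    qed
  next
    case 3
    have s: "(if Suc w = m then 0 else Suc w) = Suc w" using 3 by auto
    have p: "(if w = 0 then m - 1 else w - 1) = w - 1" using 3 by auto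
    consider "q < w" | "q = w" | "w < q" by linarith
    thus ?thesis
    proof cases
      case 1
      hence "q = w - 1 \<or> q < w - 1" by linarith
      then show ?thesis unfolding s p using 3 q mpos \<open>q < w\<close>
        by (elim disjE) (auto simp: cyc_def min_def max_def of_nat_diff field_simps)
    next
      case 2 then show ?thesis unfolding s p using 3 q mpos
        by (auto simp: cyc_def min_def max_def of_nat_diff field_simps)
    next
      case 3 then show ?thesis unfolding s p using \<open>0 < w\<close> q mpos
        by (auto simp: cyc_def min_def max_def of_nat_diff field_simps)
    qed
  qed
qed

lemma path_lap:
  fixes t D K :: nat
  assumes "t \<le> K" "D \<le> K"
  shows "(if t < K then real (min t D) - real (min (Suc t) D) else 0)
       + (if 1 \<le> t then real (min t D) - real (min (t - 1) D) else 0)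
       = (if t = D then 1 else 0) - (if t = 0 then 1 else 0)"
  using assms by (auto simp: min_def of_nat_diff)



context cbg begin

definition "al v = (if v < a then v else 0)"
definition "de v = (if v < a then 0 else if v \<le> c then v + 1 - a else k - 1)"
definition "be v = (if c \<le> v then v - c else 0)"
definition "G v w = cyc a (al v) (al w) + real (min (de v) (de w)) + cyc b (be v) (be w)"
definition "Lap f w = (\<Sum>e\<in>AR. if fst e = w then f (fst e) - f (snd e) else (0::real))"

lemma de_le: "de q \<le> k - 1" unfolding de_def c_def using k2 by auto
lemma al_lt: "al q < a" unfolding al_def using a3 by auto
lemma be_lt: "q < n \<Longrightarrow> be q < b" unfolding be_def using cbn b3 by auto

lemma G_A: "x < a \<Longrightarrow> G x q = cyc a x (al q)"
  unfolding G_def al_def de_def be_def using c_ge_a by auto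
lemma G_P: "t < k \<Longrightarrow> G (pv t) q = real (min t (de q))"
  unfolding G_def al_def de_def be_def cb_path_vertex_def c_def using a3 by auto
lemma G_B: "s < b \<Longrightarrow> G (c + s) q = real (de q) + cyc b s (be q)"
proof -
  have "de (c + s) = k - 1" using c_ge_a a3 k2 unfolding de_def c_def by auto
  moreover have "al (c + s) = 0" "be (c + s) = s" using c_ge_a unfolding al_def be_def by auto
  ultimately show ?thesis unfolding G_def using de_le[of q] by (simp add: min_def)
qed

lemma Lap_expand: "Lap f w =
     (if w < a then (f w - f (sa w)) + (f w - f (pa w)) else 0)
   + (if w = 0 \<or> (a \<le> w \<and> w < c) then f w - f (pv (Suc (pidx w))) else 0)
   + (if a \<le> w \<and> w \<le> c then f w - f (pv (w - a)) else 0)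
   + (if c \<le> w \<and> w < n then (f w - f (c + sb (w - c))) + (f w - f (c + pb (w - c))) else 0)"
  unfolding Lap_def by (subst sum_tail) simp

lemma Lap_G: assumes w: "w < n" and q: "q < n"
  shows "Lap (\<lambda>v. G v q) w = (if w = q then 1 else 0) - (if w = 0 then 1 else 0)"
proof -
  define A where "A = (if w < a then (if w = al q then 1 else 0) - (if w = 0 then 1 else 0) else (0::real))"
  define PP where "PP = (if w = 0 \<or> (a \<le> w \<and> w \<le> c) then (if pidx w = de q then 1 else 0) - (if pidx w = 0 then 1 else 0) else (0::real))"
  define BB where "BB = (if c \<le> w \<and> w < n then (if w - c = be q then 1 else 0) - (if w = c then 1 else 0) else (0::real))"
  have eA: "(if w < a then (G w q - G (sa w) q) + (G w q - G (pa w) q) else 0) = A"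
  proof (cases "w < a")
    case True
    have "sa w < a" "pa w < a" using True sa_lt a3 by (auto simp: pa_def)
    hence "(G w q - G (sa w) q) + (G w q - G (pa w) q) = 2 * cyc a w (al q) - cyc a (sa w) (al q) - cyc a (pa w) (al q)"
      using True by (simp add: G_A)
    also have "\<dots> = (if w = al q then 1 else 0) - (if w = 0 then 1 else 0)"
      using cyc_lap[OF a3 True al_lt] unfolding sa_def pa_def .
    finally show ?thesis using True unfolding A_def by simp
  qed (simp add: A_def)
  have eB: "(if c \<le> w \<and> w < n then (G w q - G (c + sb (w - c)) q) + (G w q - G (c + pb (w - c)) q) else 0) = BB"
  proof (cases "c \<le> w \<and> w < n")
    case True
    define s where "s = w - c"
    have ws: "w = c + s" and s: "s < b" using True cbn unfolding s_def by auto
    have "sb s < b" "pb s < b" using s sb_lt b3 by (auto simp: pb_def)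
    hence "(G w q - G (c + sb (w - c)) q) + (G w q - G (c + pb (w - c)) q) = 2 * cyc b s (be q) - cyc b (sb s) (be q) - cyc b (pb s) (be q)"
      using s unfolding ws by (simp add: G_B)
    also have "\<dots> = (if s = be q then 1 else 0) - (if s = 0 then 1 else 0)"
      using cyc_lap[OF b3 s be_lt[OF q]] unfolding sb_def pb_def .
    finally show ?thesis using True unfolding BB_def s_def by auto
  qed (auto simp: BB_def)
  have eP: "(if w = 0 \<or> (a \<le> w \<and> w < c) then G w q - G (pv (Suc (pidx w))) q else 0)
          + (if a \<le> w \<and> w \<le> c then G w q - G (pv (w - a)) q else 0) = PP"
  proof (cases "w = 0 \<or> (a \<le> w \<and> w \<le> c)")
    case True
    define t where "t = pidx w"
    have wt: "w = pv t" and tk: "t \<le> k - 1" using True a3 k2 unfolding t_def pidx_def cb_path_vertex_def c_def by auto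
    have c1: "(w = 0 \<or> (a \<le> w \<and> w < c)) \<longleftrightarrow> t < k - 1" using True a3 k2 unfolding t_def pidx_def c_def by auto
    have c2: "(a \<le> w \<and> w \<le> c) \<longleftrightarrow> 1 \<le> t" using True a3 k2 unfolding t_def pidx_def c_def by auto
    have c3: "a \<le> w \<and> w \<le> c \<Longrightarrow> w - a = t - 1" using True unfolding t_def pidx_def by auto
    have g1: "G w q = real (min t (de q))" using wt tk k2 G_P[of t q] by simp
    have g2: "G (pv (Suc (pidx w))) q = real (min (Suc t) (de q))" if "t < k - 1"
      using that G_P[of "Suc t" q] unfolding t_def by simp
    have g3: "G (pv (w - a)) q = real (min (t - 1) (de q))" if "a \<le> w \<and> w \<le> c"
      using that c3 tk k2 G_P[of "t - 1" q] by simp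
    have "(if w = 0 \<or> (a \<le> w \<and> w < c) then G w q - G (pv (Suc (pidx w))) q else 0)
          + (if a \<le> w \<and> w \<le> c then G w q - G (pv (w - a)) q else 0)
        = (if t < k - 1 then real (min t (de q)) - real (min (Suc t) (de q)) else 0)
          + (if 1 \<le> t then real (min t (de q)) - real (min (t - 1) (de q)) else 0)"
      unfolding c1 c2 using g1 g2 g3 c2 by simp
    also have "\<dots> = (if t = de q then 1 else 0) - (if t = 0 then 1 else 0)"
      by (rule path_lap[OF tk de_le])
    finally show ?thesis using True unfolding PP_def t_def by simp
  next
    case False
    thus ?thesis unfolding PP_def by auto
  qed
  have "Lap (\<lambda>v. G v q) w = A + PP + BB"
    unfolding Lap_expand using eA eB eP by simp
  also have "\<dots> = (if w = q then 1 else 0) - (if w = 0 then 1 else 0)"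
  proof -
    have ca: "a < c \<or> a = c" using c_ge_a by auto
    consider "w = 0" | "0 < w" "w < a" | "a \<le> w" "w < c" | "w = c" | "c < w" "w < n"
      using w c_ge_a by linarith
    thus ?thesis
    proof cases
      case 1
      have "A = (if q = 0 \<or> a \<le> q then 1 else 0) - 1" unfolding A_def al_def using 1 a3 by auto
      moreover have "PP = (if q < a then 1 else 0) - 1" unfolding PP_def pidx_def de_def using 1 a3 k2
        by (auto simp: c_def)
      moreover have "BB = 0" unfolding BB_def using 1 a3 c_ge_a by auto
      ultimately show ?thesis using 1 a3 by auto
    next
      case 2
      have "A = (if w = q then 1 else 0)" unfolding A_def al_def using 2 by auto
      moreover have "PP = 0" unfolding PP_def using 2 c_ge_a by auto
      moreover have "BB = 0" unfolding BB_def using 2 c_ge_a by auto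
      ultimately show ?thesis using 2 by auto
    next
      case 3
      have "A = 0" unfolding A_def using 3 by auto
      moreover have "PP = (if w = q then 1 else 0)" unfolding PP_def pidx_def de_def using 3 a3 k2 q
        by (auto simp: c_def)
      moreover have "BB = 0" unfolding BB_def using 3 by auto
      ultimately show ?thesis using 3 a3 by auto
    next
      case 4
      have "A = 0" unfolding A_def using 4 c_ge_a by auto
      moreover have "PP = (if c \<le> q then 1 else 0)" unfolding PP_def pidx_def de_def using 4 a3 k2 q
        by (auto simp: c_def)
      moreover have "BB = (if q \<le> c then 1 else 0) - 1" unfolding BB_def be_def using 4 c_lt by auto
      ultimately show ?thesis using 4 a3 c_ge_a by auto
    next
      case 5
      have "A = 0" unfolding A_def using 5 c_ge_a by auto
      moreover have "PP = 0" unfolding PP_def using 5 c_ge_a a3 by auto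
      moreover have "BB = (if w = q then 1 else 0)" unfolding BB_def be_def using 5 by auto
      ultimately show ?thesis using 5 a3 c_ge_a by auto
    qed
  qed
  finally show ?thesis .
qed

end


context cbg begin

definition "NN = 2 * (a + b + k - 1)"
definition "d v = real (dg v)"
definition "pp v = d v / real NN"
definition "S w = (\<Sum>v<n. d v * G w v)"
definition "Xr w j = d j * G w j - pp j * S w"

lemma finAR: "finite AR" unfolding AR_eq using fin_fams by auto

lemma count_tail: "w < n \<Longrightarrow> (\<Sum>e\<in>AR. if fst e = w then 1 else 0) = dg w"
  unfolding sum_tail using a3 k2 c_ge_a by (auto simp: dg_def c_def)

lemma card_AR: "card AR = NN"
proof -
  have "card AR = (\<Sum>e\<in>AR. 1)" by simp
  also have "\<dots> = NN" unfolding sum_AR[of "\<lambda>_. 1"] NN_def using k2 by simp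
  finally show ?thesis .
qed

lemma NN_pos: "NN > 0" unfolding NN_def using a3 by simp

lemma sum_d: "(\<Sum>v<n. d v) = real NN"
proof -
  have "(\<Sum>v<n. d v) = (\<Sum>v<n. 2 + (if v = 0 then 1 else 0) + (if v = c then 1 else 0))"
    by (rule sum.cong) (use c_ge_a a3 in \<open>auto simp: d_def dg_def\<close>)
  also have "\<dots> = 2 * real n + 1 + 1"
    using c_lt c_ge_a a3 by (simp add: sum.distrib)
  also have "\<dots> = real NN" unfolding NN_def n_def using a3 b3 k2 by simp
  finally show ?thesis .
qed

lemma sum_pi: "(\<Sum>v<n. pp v) = 1"
  unfolding pp_def using sum_d NN_pos by (simp add: sum_divide_distrib[symmetric])

lemma Lap_ind: "Lap f w = (\<Sum>e\<in>AR. (if fst e = w then 1 else 0) * (f (fst e) - f (snd e)))"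
  unfolding Lap_def by (rule sum.cong) auto

lemma Lap_lin: "Lap (\<lambda>v. x * f v + y * g v) w = x * Lap f w + y * Lap g w"
proof -
  have "Lap (\<lambda>v. x * f v + y * g v) w = (\<Sum>e\<in>AR. x * ((if fst e = w then 1 else 0) * (f (fst e) - f (snd e))) + y * ((if fst e = w then 1 else 0) * (g (fst e) - g (snd e))))"
    unfolding Lap_ind by (rule sum.cong) (auto simp: algebra_simps)
  also have "\<dots> = x * Lap f w + y * Lap g w"
    unfolding Lap_ind by (simp add: sum.distrib sum_distrib_left)
  finally show ?thesis .
qed

lemma Lap_sum: "Lap (\<lambda>v. \<Sum>u<m. h u v) w = (\<Sum>u<m. Lap (h u) w)"
proof -
  have "Lap (\<lambda>v. \<Sum>u<m. h u v) w = (\<Sum>e\<in>AR. \<Sum>u<m. (if fst e = w then 1 else 0) * (h u (fst e) - h u (snd e)))"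
    unfolding Lap_ind by (rule sum.cong) (simp_all add: sum_subtractf[symmetric] sum_distrib_left)
  also have "\<dots> = (\<Sum>u<m. Lap (h u) w)"
    unfolding Lap_ind by (rule sum.swap)
  finally show ?thesis .
qed

lemma Lap_alt: "w < n \<Longrightarrow> Lap f w = d w * f w - (\<Sum>e\<in>AR. if fst e = w then f (snd e) else 0)"
proof -
  assume w: "w < n"
  have "Lap f w = (\<Sum>e\<in>AR. (if fst e = w then 1 else 0) * f w - (if fst e = w then f (snd e) else 0))"
    unfolding Lap_def by (rule sum.cong) auto
  also have "\<dots> = (\<Sum>e\<in>AR. if fst e = w then 1 else 0) * f w - (\<Sum>e\<in>AR. if fst e = w then f (snd e) else 0)"
    by (simp add: sum_subtractf sum_distrib_right)
  also have "(\<Sum>e\<in>AR. if fst e = w then 1 else (0::real)) = d w"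
    unfolding sum_tail d_def dg_def using w a3 k2 c_ge_a by (auto simp: c_def)
  finally show ?thesis .
qed

lemma vertex_eq: assumes w: "w < n" and j: "j < n"
  shows "d w * Xr w j - (\<Sum>e\<in>AR. if fst e = w then Xr (snd e) j else 0)
       = d w * ((if w = j then 1 else 0) - pp j)"
proof -
  have LS: "Lap S w = d w - (if w = 0 then real NN else 0)"
  proof -
    have "Lap S w = Lap (\<lambda>v. \<Sum>u<n. d u * G v u) w" unfolding S_def by simp
    also have "\<dots> = (\<Sum>u<n. Lap (\<lambda>v. d u * G v u) w)" by (rule Lap_sum)
    also have "\<dots> = (\<Sum>u<n. d u * ((if w = u then 1 else 0) - (if w = 0 then 1 else 0)))"
    proof (rule sum.cong)
      fix u assume "u \<in> {..<n}"
      hence u: "u < n" by simp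
      have "Lap (\<lambda>v. d u * G v u) w = d u * Lap (\<lambda>v. G v u) w + 0 * Lap (\<lambda>v. 0) w"
        using Lap_lin[of "d u" "\<lambda>v. G v u" 0 "\<lambda>v. 0" w] by simp
      thus "Lap (\<lambda>v. d u * G v u) w = d u * ((if w = u then 1 else 0) - (if w = 0 then 1 else 0))"
        using Lap_G[OF w u] by simp
    qed simp
    also have "\<dots> = (\<Sum>u<n. (if w = u then d u else 0) - (if w = 0 then 1 else 0) * d u)"
      by (rule sum.cong) auto
    also have "\<dots> = d w - (if w = 0 then 1 else 0) * (\<Sum>u<n. d u)"
      using w by (simp add: sum_subtractf sum_distrib_left)
    finally show ?thesis using sum_d by simp
  qed
  have "d w * Xr w j - (\<Sum>e\<in>AR. if fst e = w then Xr (snd e) j else 0) = Lap (\<lambda>v. Xr v j) w"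
    using Lap_alt[OF w] by simp
  also have "\<dots> = d j * Lap (\<lambda>v. G v j) w + (- pp j) * Lap S w"
    unfolding Xr_def using Lap_lin[of "d j" "\<lambda>v. G v j" "- pp j" S w] by (simp add: algebra_simps)
  also have "\<dots> = d j * ((if w = j then 1 else 0) - (if w = 0 then 1 else 0)) - pp j * (d w - (if w = 0 then real NN else 0))"
    using Lap_G[OF w j] LS by simp
  also have "\<dots> = d w * ((if w = j then 1 else 0) - pp j)"
    using NN_pos unfolding pp_def by (auto simp: field_simps)
  finally show ?thesis .
qed

end


context cbg begin

definition "L = sorted_list_of_set AR"
definition "Pr e f = (if snd e = fst f then 1 / d (snd e) else 0)"
definition "Yr e f = Xr (snd e) (fst f) / d (fst f)"

lemma L_props: "set L = AR" "distinct L" "length L = NN"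
  unfolding L_def using finAR card_AR by auto

lemma sum_L: "(\<Sum>j<NN. F (L ! j)) = (\<Sum>e\<in>AR. F e)"
proof -
  have "(\<Sum>j<NN. F (L ! j)) = sum_list (map F L)"
    by (simp add: sum_list_sum_nth L_props atLeast0LessThan)
  also have "\<dots> = sum F (set L)" using L_props(2) by (simp add: sum_list_distinct_conv_sum_set)
  finally show ?thesis using L_props(1) by simp
qed

lemma AR_lt: "e \<in> AR \<Longrightarrow> fst e < n \<and> snd e < n"
  using fams_in unfolding AR_eq by auto

lemma d_pos: "d v > 0" unfolding d_def dg_def by auto

lemma count_real: "w < n \<Longrightarrow> (\<Sum>e\<in>AR. if fst e = w then 1 else (0::real)) = d w"
  unfolding sum_tail d_def dg_def using a3 k2 c_ge_a by (auto simp: c_def)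

lemma regroup: "(\<Sum>e\<in>AR. F e) = (\<Sum>t<n. \<Sum>e\<in>AR. if fst e = t then F e else (0::real))"
proof -
  have "(\<Sum>t<n. \<Sum>e\<in>AR. if fst e = t then F e else (0::real)) = (\<Sum>e\<in>AR. \<Sum>t<n. if fst e = t then F e else 0)"
    by (rule sum.swap)
  also have "\<dots> = (\<Sum>e\<in>AR. F e)"
    by (rule sum.cong) (auto simp: sum.delta' dest: AR_lt)
  finally show ?thesis by simp
qed

lemma R1: "e \<in> AR \<Longrightarrow> (\<Sum>g\<in>AR. Pr e g) = 1"
proof -
  assume e: "e \<in> AR"
  have "(\<Sum>g\<in>AR. Pr e g) = (\<Sum>g\<in>AR. (1 / d (snd e)) * (if fst g = snd e then 1 else 0))"
    unfolding Pr_def by (rule sum.cong) auto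
  also have "\<dots> = (1 / d (snd e)) * (\<Sum>g\<in>AR. if fst g = snd e then 1 else 0)"
    by (simp only: sum_distrib_left)
  also have "\<dots> = (1 / d (snd e)) * d (snd e)"
    using AR_lt[OF e] by (simp only: count_real)
  finally show ?thesis using d_pos[of "snd e"] by simp
qed

lemma R2: assumes e: "e \<in> AR" and f: "f \<in> AR"
  shows "Yr e f - Pr e f - (\<Sum>g\<in>AR. Pr e g * Yr g f) = - 1 / real NN"
proof -
  define h where "h = snd e"
  define t where "t = fst f"
  have h: "h < n" and t: "t < n" using AR_lt e f unfolding h_def t_def by auto
  have vs: "(\<Sum>g\<in>AR. if fst g = h then Xr (snd g) t else 0) = d h * Xr h t - d h * ((if h = t then 1 else 0) - pp t)"
    using vertex_eq[OF h t] by (simp add: algebra_simps)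
  have "(\<Sum>g\<in>AR. Pr e g * Yr g f) = (\<Sum>g\<in>AR. (1 / (d h * d t)) * (if fst g = h then Xr (snd g) t else 0))"
    unfolding Pr_def Yr_def h_def t_def by (rule sum.cong) auto
  also have "\<dots> = (1 / (d h * d t)) * (\<Sum>g\<in>AR. if fst g = h then Xr (snd g) t else 0)"
    by (simp only: sum_distrib_left)
  also have "\<dots> = (1 / (d h * d t)) * (d h * Xr h t - d h * ((if h = t then 1 else 0) - pp t))"
    by (simp only: vs)
  also have "\<dots> = (Xr h t - (if h = t then 1 else 0) + pp t) / d t"
    using d_pos[of h] d_pos[of t] by (simp add: field_simps)
  finally have s: "(\<Sum>g\<in>AR. Pr e g * Yr g f) = (Xr h t - (if h = t then 1 else 0) + pp t) / d t" .
  have p: "Pr e f = (if h = t then 1 / d t else 0)" unfolding Pr_def h_def t_def by auto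
  show ?thesis unfolding s p unfolding Yr_def h_def[symmetric] t_def[symmetric]
    using d_pos[of t] NN_pos unfolding pp_def by (auto simp: field_simps)
qed

lemma row_Xr: "h < n \<Longrightarrow> (\<Sum>t<n. Xr h t) = 0"
  unfolding Xr_def by (simp add: sum_subtractf sum_distrib_right[symmetric] sum_pi S_def mult.commute)

lemma R3: "(\<Sum>e\<in>AR. Yr e e) = (\<Sum>t<n. Xr t t) - real n + 1"
proof -
  have "(\<Sum>e\<in>AR. Yr e e) = (\<Sum>t<n. \<Sum>e\<in>AR. if fst e = t then Yr e e else 0)" by (rule regroup)
  also have "\<dots> = (\<Sum>t<n. (1 / d t) * (\<Sum>e\<in>AR. if fst e = t then Xr (snd e) t else 0))"
    unfolding Yr_def by (rule sum.cong) (auto simp: sum_distrib_left intro!: sum.cong)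
  also have "\<dots> = (\<Sum>t<n. (1 / d t) * (d t * Xr t t - d t * (1 - pp t)))"
  proof (rule sum.cong)
    fix x assume "x \<in> {..<n}"
    hence "(\<Sum>e\<in>AR. if fst e = x then Xr (snd e) x else 0) = d x * Xr x x - d x * (1 - pp x)"
      using vertex_eq[of x x] by (simp add: algebra_simps)
    thus "(1 / d x) * (\<Sum>e\<in>AR. if fst e = x then Xr (snd e) x else 0) = (1 / d x) * (d x * Xr x x - d x * (1 - pp x))"
      by simp
  qed simp
  also have "\<dots> = (\<Sum>t<n. Xr t t - 1 + pp t)"
  proof (rule sum.cong)
    fix x assume "x \<in> {..<n}"
    show "(1 / d x) * (d x * Xr x x - d x * (1 - pp x)) = Xr x x - 1 + pp x"
      using d_pos[of x] by (simp add: field_simps)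
  qed simp
  also have "\<dots> = (\<Sum>t<n. Xr t t) - real n + 1"
    by (simp add: sum.distrib sum_subtractf sum_pi)
  finally show ?thesis .
qed

lemma R4: "e \<in> AR \<Longrightarrow> (\<Sum>f\<in>AR. Yr e f) = 0"
proof -
  assume e: "e \<in> AR"
  have "(\<Sum>f\<in>AR. Yr e f) = (\<Sum>t<n. \<Sum>f\<in>AR. if fst f = t then Yr e f else 0)" by (rule regroup)
  also have "\<dots> = (\<Sum>t<n. (Xr (snd e) t / d t) * (\<Sum>f\<in>AR. if fst f = t then 1 else 0))"
    unfolding Yr_def by (rule sum.cong) (auto simp: sum_distrib_left intro!: sum.cong)
  also have "\<dots> = (\<Sum>t<n. Xr (snd e) t)"
  proof (rule sum.cong)
    fix x assume "x \<in> {..<n}"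
    hence "(\<Sum>f\<in>AR. if fst f = x then 1 else 0) = d x" using count_real by simp
    thus "(Xr (snd e) x / d x) * (\<Sum>f\<in>AR. if fst f = x then 1 else 0) = Xr (snd e) x"
      using d_pos[of x] by simp
  qed simp
  also have "\<dots> = 0" using row_Xr AR_lt[OF e] by simp
  finally show ?thesis .
qed

end


context cbg begin

lemma L_in: "i < NN \<Longrightarrow> L ! i \<in> AR" using L_props nth_mem by metis

lemma sum_L_c: "(\<Sum>j<NN. complex_of_real (F (L ! j))) = complex_of_real (\<Sum>e\<in>AR. F e)"
  unfolding of_real_sum[symmetric] sum_L ..

lemma kemeny_arc:
  "kemeny_edge (cb_vertices k a b) (cb_adj k a b) = complex_of_real (real NN - real n + (\<Sum>t<n. Xr t t))"
proof -
  define P where "P = arc_walk_matrix {..<n} adj"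
  define Y where "Y = mat NN NN (\<lambda>(i,j). (if i = j then 1 else 0) + complex_of_real (Yr (L ! i) (L ! j)))"
  define \<pi> where "\<pi> = (\<lambda>_::nat. complex_of_real (1 / real NN))"
  have V: "cb_vertices k a b = {..<n}" unfolding cb_vertices_def n_def by simp
  have Pdef: "P = mat NN NN (\<lambda>(i,j). if snd (L!i) = fst (L!j) then 1 / of_nat (gdeg {..<n} adj (snd (L!i))) else 0)"
    unfolding P_def arc_walk_matrix_def Let_def L_def[symmetric] AR_def[symmetric] using L_props(3) by simp
  have Pc: "P \<in> carrier_mat NN NN" unfolding Pdef by simp
  have Yc: "Y \<in> carrier_mat NN NN" unfolding Y_def by simp
  have Pij: "P $$ (i,j) = complex_of_real (Pr (L!i) (L!j))" if "i < NN" "j < NN" for i j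
  proof -
    have "snd (L!i) < n" "fst (L!j) < n" using AR_lt L_in that by blast+
    hence "gdeg {..<n} adj (snd (L!i)) = dg (snd (L!i))" "gdeg {..<n} adj (fst (L!j)) = dg (fst (L!j))"
      by (auto intro: deg_eq)
    thus ?thesis unfolding Pdef Pr_def d_def using that by simp
  qed
  have rs: "(\<Sum>j<NN. P $$ (i,j)) = 1" if i: "i < NN" for i
  proof -
    have "(\<Sum>j<NN. P $$ (i,j)) = (\<Sum>j<NN. complex_of_real (Pr (L!i) (L!j)))"
      by (rule sum.cong) (use Pij i in auto)
    also have "\<dots> = complex_of_real (\<Sum>e\<in>AR. Pr (L!i) e)" by (rule sum_L_c)
    also have "\<dots> = 1" using R1[OF L_in[OF i]] by simp
    finally show ?thesis .
  qed
  have ps: "(\<Sum>i<NN. \<pi> i) = 1" unfolding \<pi>_def using NN_pos by simp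
  have XX: "Y $$ (i,j) - (\<Sum>l<NN. P $$ (i,l) * Y $$ (l,j)) = (if i = j then 1 else 0) - \<pi> j"
    if i: "i < NN" and j: "j < NN" for i j
  proof -
    have "(\<Sum>l<NN. P $$ (i,l) * Y $$ (l,j)) = (\<Sum>l<NN. (if l = j then P $$ (i,l) else 0) + complex_of_real (Pr (L!i) (L!l) * Yr (L!l) (L!j)))"
      by (rule sum.cong) (use Pij i j in \<open>auto simp: Y_def algebra_simps\<close>)
    also have "\<dots> = P $$ (i,j) + complex_of_real (\<Sum>g\<in>AR. Pr (L!i) g * Yr g (L!j))"
      using j sum_L_c[of "\<lambda>g. Pr (L!i) g * Yr g (L!j)"] by (simp add: sum.distrib)
    finally have s: "(\<Sum>l<NN. P $$ (i,l) * Y $$ (l,j)) = complex_of_real (Pr (L!i) (L!j)) + complex_of_real (\<Sum>g\<in>AR. Pr (L!i) g * Yr g (L!j))"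
      using Pij[OF i j] by simp
    have "Y $$ (i,j) - (\<Sum>l<NN. P $$ (i,l) * Y $$ (l,j)) = (if i = j then 1 else 0)
        + complex_of_real (Yr (L!i) (L!j) - Pr (L!i) (L!j) - (\<Sum>g\<in>AR. Pr (L!i) g * Yr g (L!j)))"
      unfolding s using i j by (simp add: Y_def)
    also have "\<dots> = (if i = j then 1 else 0) - \<pi> j"
      unfolding R2[OF L_in[OF i] L_in[OF j]] \<pi>_def by simp
    finally show ?thesis .
  qed
  have K: "kemeny P = mtr Y - (\<Sum>i<NN. \<Sum>j<NN. \<pi> i * Y $$ (i,j))"
    by (rule kemeny_certificate[OF Pc Yc rs ps XX])
  have mY: "mtr Y = complex_of_real (real NN + ((\<Sum>t<n. Xr t t) - real n + 1))"
  proof -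
    have "mtr Y = (\<Sum>i<NN. 1 + complex_of_real (Yr (L!i) (L!i)))"
      unfolding mtr_def using Yc by (simp add: Y_def)
    also have "\<dots> = of_nat NN + complex_of_real (\<Sum>e\<in>AR. Yr e e)"
      using sum_L_c[of "\<lambda>e. Yr e e"] by (simp add: sum.distrib)
    finally show ?thesis unfolding R3 by simp
  qed
  have sY: "(\<Sum>i<NN. \<Sum>j<NN. \<pi> i * Y $$ (i,j)) = 1"
  proof -
    have "(\<Sum>i<NN. \<Sum>j<NN. \<pi> i * Y $$ (i,j)) = (\<Sum>i<NN. \<pi> i * (1 + complex_of_real (\<Sum>f\<in>AR. Yr (L!i) f)))"
    proof (rule sum.cong)
      fix i assume "i \<in> {..<NN}"
      hence i: "i < NN" by simp
      have "(\<Sum>j<NN. \<pi> i * Y $$ (i,j)) = \<pi> i * (\<Sum>j<NN. (if i = j then 1 else 0) + complex_of_real (Yr (L!i) (L!j)))"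
        unfolding sum_distrib_left using i by (intro sum.cong) (auto simp: Y_def)
      also have "\<dots> = \<pi> i * (1 + complex_of_real (\<Sum>f\<in>AR. Yr (L!i) f))"
        using i by (simp add: sum.distrib sum_L_c)
      finally show "(\<Sum>j<NN. \<pi> i * Y $$ (i,j)) = \<pi> i * (1 + complex_of_real (\<Sum>f\<in>AR. Yr (L!i) f))" .
    qed simp
    also have "\<dots> = (\<Sum>i<NN. \<pi> i)" using R4 L_in by simp
    finally show ?thesis using ps by simp
  qed
  have "kemeny_edge (cb_vertices k a b) (cb_adj k a b) = kemeny P"
    unfolding kemeny_edge_def V P_def ..
  also have "\<dots> = complex_of_real (real NN + ((\<Sum>t<n. Xr t t) - real n + 1)) - 1"
    unfolding K mY sY ..
  also have "\<dots> = complex_of_real (real NN + ((\<Sum>t<n. Xr t t) - real n + 1) - 1)"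
    by (simp only: of_real_diff of_real_1)
  also have "\<dots> = complex_of_real (real NN - real n + (\<Sum>t<n. Xr t t))"
    by (rule arg_cong[where f=complex_of_real]) simp
  finally show ?thesis .
qed

end


lemma sum_id_r: "(\<Sum>x<m. real x) = real m * (real m - 1) / 2"
  by (induction m) (auto simp: field_simps)

lemma sum_sq_r: "(\<Sum>x<m. real x * real x) = real m * (real m - 1) * (2 * real m - 1) / 6"
  by (induction m) (auto simp: field_simps)

lemma sum_min_r: "(\<Sum>x<m. \<Sum>y<m. real (min x y)) = real m * (real m - 1) * (2 * real m - 1) / 6"
proof (induction m)
  case 0 then show ?case by simp
next
  case (Suc m)
  have inner: "(\<Sum>y<Suc m. real (min x y)) = (\<Sum>y<m. real (min x y)) + real x" if "x < m" for x
    using that by simp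
  have "(\<Sum>x<Suc m. \<Sum>y<Suc m. real (min x y)) = (\<Sum>x<m. \<Sum>y<Suc m. real (min x y)) + (\<Sum>y<Suc m. real (min m y))"
    by simp
  also have "(\<Sum>x<m. \<Sum>y<Suc m. real (min x y)) = (\<Sum>x<m. \<Sum>y<m. real (min x y)) + (\<Sum>x<m. real x)"
    by (simp add: inner sum.distrib)
  also have "(\<Sum>y<Suc m. real (min m y)) = (\<Sum>y<m. real y) + real m"
    by (simp add: min_def)
  finally show ?case using Suc.IH by (simp add: sum_id_r field_simps)
qed

lemma sum_min_shift: "(\<Sum>x<m. \<Sum>y<m. real (min (Suc x) (Suc y))) = real (Suc m) * real m * (2 * real m + 1) / 6"
proof -
  have "(\<Sum>x<Suc m. \<Sum>y<Suc m. real (min x y)) = (\<Sum>x<m. \<Sum>y<m. real (min (Suc x) (Suc y)))"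
    by (simp only: sum.lessThan_Suc_shift) simp
  thus ?thesis using sum_min_r[of "Suc m"] by (simp add: field_simps)
qed

lemma cyc_alt: "m > 0 \<Longrightarrow> cyc m x y = real (min x y) - real x * real y / real m"
  by (cases "x \<le> y") (auto simp: cyc_def min_def max_def field_simps)

lemma sum_cyc_diag: "m > 0 \<Longrightarrow> (\<Sum>x<m. cyc m x x) = (real m * real m - 1) / 6"
proof -
  assume m: "m > 0"
  have "(\<Sum>x<m. cyc m x x) = (\<Sum>x<m. real x) - (\<Sum>x<m. real x * real x) / real m"
    using m by (simp add: cyc_alt sum_subtractf sum_divide_distrib)
  also have "\<dots> = (real m * real m - 1) / 6"
    unfolding sum_id_r sum_sq_r using m by (simp add: field_simps)
  finally show ?thesis .
qed

lemma sum_cyc_all: "m > 0 \<Longrightarrow> (\<Sum>x<m. \<Sum>y<m. cyc m x y) = real m * (real m * real m - 1) / 12"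
proof -
  assume m: "m > 0"
  have "(\<Sum>x<m. \<Sum>y<m. cyc m x y) = (\<Sum>x<m. \<Sum>y<m. real (min x y)) - (\<Sum>x<m. real x) * (\<Sum>y<m. real y) / real m"
    using m by (simp add: cyc_alt sum_subtractf sum_divide_distrib sum_product)
  also have "\<dots> = real m * (real m * real m - 1) / 12"
    unfolding sum_id_r sum_min_r using m by (simp add: field_simps)
  finally show ?thesis .
qed

lemma wsum: "(\<Sum>x<(m::nat). (2 + (if x = 0 then 1 else 0)) * g x) = 2 * (\<Sum>x<m. g x) + (if 0 < m then g 0 else (0::real))"
proof -
  have "(\<Sum>x<m. (2 + (if x = 0 then 1 else 0)) * g x) = (\<Sum>x<m. 2 * g x + (if x = 0 then g x else 0))"
    by (rule sum.cong) auto
  moreover have "(\<Sum>x<m. if x = 0 then g x else 0) = (if 0 < m then g 0 else 0)"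
    by (induction m) auto
  ultimately show ?thesis by (simp add: sum.distrib sum_distrib_left)
qed

lemma sum_split_add: "(\<Sum>i<p+q. f i) = (\<Sum>i<p. f i) + (\<Sum>i<q. f (p+i::nat))"
  by (induction q) (auto simp: add_ac)



context cbg begin

lemma split_n: "(\<Sum>v<n. f v) = (\<Sum>x<a. f x) + (\<Sum>t<k-2. f (a+t)) + (\<Sum>s<b. f (c+s))"
proof -
  have "n = (a + (k-2)) + b" unfolding n_def using k2 by simp
  hence "(\<Sum>v<n. f v) = (\<Sum>v<a + (k-2). f v) + (\<Sum>s<b. f (a + (k-2) + s))"
    by (simp only: sum_split_add)
  also have "(\<Sum>v<a + (k-2). f v) = (\<Sum>x<a. f x) + (\<Sum>t<k-2. f (a+t))"
    by (rule sum_split_add)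
  finally show ?thesis unfolding c_def using k2 by simp
qed

lemma GAA: "x < a \<Longrightarrow> y < a \<Longrightarrow> G x y = cyc a x y"
  using G_A[of x y] unfolding al_def by simp
lemma GAP: "x < a \<Longrightarrow> t < k-2 \<Longrightarrow> G x (a+t) = 0 \<and> G (a+t) x = 0"
  unfolding G_def al_def de_def be_def c_def by auto
lemma GAB: "x < a \<Longrightarrow> s < b \<Longrightarrow> G x (c+s) = 0 \<and> G (c+s) x = 0"
  using c_ge_a unfolding G_def al_def de_def be_def by auto
lemma GPP: "t < k-2 \<Longrightarrow> t' < k-2 \<Longrightarrow> G (a+t) (a+t') = real (min (Suc t) (Suc t'))"
  unfolding G_def al_def de_def be_def c_def by auto
lemma GPB: "t < k-2 \<Longrightarrow> s < b \<Longrightarrow> G (a+t) (c+s) = real (Suc t) \<and> G (c+s) (a+t) = real (Suc t)"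
  using c_ge_a unfolding G_def al_def de_def be_def c_def by (auto simp: min_def)
lemma GBB: "s < b \<Longrightarrow> s' < b \<Longrightarrow> G (c+s) (c+s') = real (k-1) + cyc b s s'"
proof -
  assume s: "s < b" and s': "s' < b"
  have "de (c + s') = k - 1" using c_ge_a a3 k2 unfolding de_def c_def by auto
  moreover have "be (c + s') = s'" unfolding be_def by auto
  ultimately show ?thesis using G_B[OF s, of "c+s'"] by simp
qed

lemma dA: "x < a \<Longrightarrow> d x = 2 + (if x = 0 then 1 else 0)"
  using c_ge_a unfolding d_def dg_def by auto
lemma dP: "t < k-2 \<Longrightarrow> d (a+t) = 2"
  using a3 unfolding d_def dg_def c_def by auto
lemma dB: "s < b \<Longrightarrow> d (c+s) = 2 + (if s = 0 then 1 else 0)"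
  using a3 c_ge_a unfolding d_def dg_def by auto

definition "TT = (\<Sum>t<k-2. real (Suc t))"
lemma TT_val: "TT = (real k - 2) * (real k - 1) / 2"
proof -
  have "TT = (\<Sum>t<k-2. real t) + real (k-2)" unfolding TT_def by (simp add: sum.distrib)
  also have "\<dots> = (real k - 2) * (real k - 1) / 2" using k2 by (simp add: sum_id_r of_nat_diff field_simps)
  finally show ?thesis .
qed

lemma S1_val: "(\<Sum>v<n. d v * G v v) = (real a * real a - 1) / 3 + 2 * TT + (2 * real b + 1) * (real k - 1) + (real b * real b - 1) / 3"
proof -
  have A: "(\<Sum>x<a. d x * G x x) = (real a * real a - 1) / 3"
  proof -
    have "(\<Sum>x<a. d x * G x x) = (\<Sum>x<a. (2 + (if x = 0 then 1 else 0)) * cyc a x x)"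
      by (rule sum.cong) (auto simp: dA GAA)
    also have "\<dots> = (real a * real a - 1) / 3" unfolding wsum using a3 by (simp add: sum_cyc_diag)
    finally show ?thesis .
  qed
  have P: "(\<Sum>t<k-2. d (a+t) * G (a+t) (a+t)) = 2 * TT"
    unfolding TT_def sum_distrib_left by (rule sum.cong) (auto simp: dP GPP)
  have B: "(\<Sum>s<b. d (c+s) * G (c+s) (c+s)) = (2 * real b + 1) * (real k - 1) + (real b * real b - 1) / 3"
  proof -
    have "(\<Sum>s<b. d (c+s) * G (c+s) (c+s)) = (\<Sum>s<b. (2 + (if s = 0 then 1 else 0)) * (real (k-1) + cyc b s s))"
      by (rule sum.cong) (auto simp: dB GBB)
    also have "\<dots> = 2 * (real b * real (k-1) + (real b * real b - 1) / 6) + real (k-1)"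
      unfolding wsum using b3 by (simp add: sum.distrib sum_cyc_diag)
    also have "\<dots> = (2 * real b + 1) * (real k - 1) + (real b * real b - 1) / 3"
      using k2 by (simp add: of_nat_diff field_simps)
    finally show ?thesis .
  qed
  show ?thesis unfolding split_n[of "\<lambda>v. d v * G v v"] A P B by simp
qed

lemma SA: "x < a \<Longrightarrow> S x = 2 * (\<Sum>y<a. cyc a x y)"
proof -
  assume x: "x < a"
  have "S x = (\<Sum>y<a. d y * G x y) + (\<Sum>t<k-2. d (a+t) * G x (a+t)) + (\<Sum>s<b. d (c+s) * G x (c+s))"
    unfolding S_def by (rule split_n)
  also have "(\<Sum>t<k-2. d (a+t) * G x (a+t)) = 0" using GAP[OF x] by simp
  also have "(\<Sum>s<b. d (c+s) * G x (c+s)) = 0" using GAB[OF x] by simp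
  also have "(\<Sum>y<a. d y * G x y) = (\<Sum>y<a. (2 + (if y = 0 then 1 else 0)) * cyc a x y)"
    by (rule sum.cong) (auto simp: dA GAA x)
  also have "\<dots> = 2 * (\<Sum>y<a. cyc a x y)" unfolding wsum by simp
  finally show ?thesis by simp
qed

lemma SP: "t < k-2 \<Longrightarrow> S (a+t) = 2 * (\<Sum>t'<k-2. real (min (Suc t) (Suc t'))) + (2 * real b + 1) * real (Suc t)"
proof -
  assume t: "t < k-2"
  have "S (a+t) = (\<Sum>y<a. d y * G (a+t) y) + (\<Sum>t'<k-2. d (a+t') * G (a+t) (a+t')) + (\<Sum>s<b. d (c+s) * G (a+t) (c+s))"
    unfolding S_def by (rule split_n)
  also have "(\<Sum>y<a. d y * G (a+t) y) = 0" using GAP t by simp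
  also have "(\<Sum>t'<k-2. d (a+t') * G (a+t) (a+t')) = 2 * (\<Sum>t'<k-2. real (min (Suc t) (Suc t')))"
    unfolding sum_distrib_left by (rule sum.cong) (auto simp: dP GPP t)
  also have "(\<Sum>s<b. d (c+s) * G (a+t) (c+s)) = (\<Sum>s<b. (2 + (if s = 0 then 1 else 0)) * real (Suc t))"
    by (rule sum.cong) (auto simp: dB GPB t)
  also have "\<dots> = (2 * real b + 1) * real (Suc t)" unfolding wsum using b3 by (simp add: field_simps)
  finally show ?thesis by simp
qed

lemma SB: "s < b \<Longrightarrow> S (c+s) = 2 * TT + (2 * real b + 1) * (real k - 1) + 2 * (\<Sum>s'<b. cyc b s s')"
proof -
  assume s: "s < b"
  have "S (c+s) = (\<Sum>y<a. d y * G (c+s) y) + (\<Sum>t<k-2. d (a+t) * G (c+s) (a+t)) + (\<Sum>s'<b. d (c+s') * G (c+s) (c+s'))"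
    unfolding S_def by (rule split_n)
  also have "(\<Sum>y<a. d y * G (c+s) y) = 0" using GAB s by simp
  also have "(\<Sum>t<k-2. d (a+t) * G (c+s) (a+t)) = 2 * TT"
    unfolding TT_def sum_distrib_left by (rule sum.cong) (auto simp: dP GPB s)
  also have "(\<Sum>s'<b. d (c+s') * G (c+s) (c+s')) = (\<Sum>s'<b. (2 + (if s' = 0 then 1 else 0)) * (real (k-1) + cyc b s s'))"
    by (rule sum.cong) (auto simp: dB GBB s)
  also have "\<dots> = (2 * real b + 1) * (real k - 1) + 2 * (\<Sum>s'<b. cyc b s s')"
    unfolding wsum sum.distrib using b3 k2 by (simp add: of_nat_diff field_simps)
  finally show ?thesis by simp
qed

lemma S2_val: "(\<Sum>v<n. d v * S v) = real a * (real a * real a - 1) / 3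
    + 2 * (real k - 1) * (real k - 2) * (2 * real k - 3) / 3 + 4 * (2 * real b + 1) * TT
    + (2 * real b + 1) * (2 * real b + 1) * (real k - 1) + real b * (real b * real b - 1) / 3"
proof -
  have A: "(\<Sum>x<a. d x * S x) = real a * (real a * real a - 1) / 3"
  proof -
    have "(\<Sum>x<a. d x * S x) = (\<Sum>x<a. (2 + (if x = 0 then 1 else 0)) * (2 * (\<Sum>y<a. cyc a x y)))"
      by (rule sum.cong) (auto simp: dA SA)
    also have "\<dots> = 4 * (\<Sum>x<a. \<Sum>y<a. cyc a x y)" unfolding wsum by (simp add: sum_distrib_left)
    also have "\<dots> = real a * (real a * real a - 1) / 3" using a3 by (simp add: sum_cyc_all)
    finally show ?thesis .
  qed
  have P: "(\<Sum>t<k-2. d (a+t) * S (a+t)) = 2 * (real k - 1) * (real k - 2) * (2 * real k - 3) / 3 + 2 * (2 * real b + 1) * TT"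
  proof -
    have "(\<Sum>t<k-2. d (a+t) * S (a+t)) = (\<Sum>t<k-2. 4 * (\<Sum>t'<k-2. real (min (Suc t) (Suc t'))) + 2 * (2 * real b + 1) * real (Suc t))"
    proof (rule sum.cong)
      fix t assume "t \<in> {..<k-2}"
      hence t: "t < k - 2" by simp
      show "d (a+t) * S (a+t) = 4 * (\<Sum>t'<k-2. real (min (Suc t) (Suc t'))) + 2 * (2 * real b + 1) * real (Suc t)"
        unfolding dP[OF t] SP[OF t] by (simp add: algebra_simps)
    qed simp
    also have "\<dots> = 4 * (\<Sum>t<k-2. \<Sum>t'<k-2. real (min (Suc t) (Suc t'))) + 2 * (2 * real b + 1) * TT"
      unfolding TT_def by (simp only: sum.distrib sum_distrib_left[symmetric])
    also have "(\<Sum>t<k-2. \<Sum>t'<k-2. real (min (Suc t) (Suc t'))) = (real k - 1) * (real k - 2) * (2 * real k - 3) / 6"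
      unfolding sum_min_shift using k2 by (simp add: of_nat_diff field_simps)
    finally show ?thesis by simp
  qed
  have B: "(\<Sum>s<b. d (c+s) * S (c+s)) = (2 * real b + 1) * (2 * TT + (2 * real b + 1) * (real k - 1)) + real b * (real b * real b - 1) / 3"
  proof -
    have "(\<Sum>s<b. d (c+s) * S (c+s)) = (\<Sum>s<b. (2 + (if s = 0 then 1 else 0)) * (2 * TT + (2 * real b + 1) * (real k - 1) + 2 * (\<Sum>s'<b. cyc b s s')))"
      by (rule sum.cong) (auto simp: dB SB)
    also have "\<dots> = 2 * (real b * (2 * TT + (2 * real b + 1) * (real k - 1)) + 2 * (\<Sum>s<b. \<Sum>s'<b. cyc b s s')) + (2 * TT + (2 * real b + 1) * (real k - 1))"
      unfolding wsum using b3 by (simp add: sum.distrib sum_distrib_left)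
    also have "(\<Sum>s<b. \<Sum>s'<b. cyc b s s') = real b * (real b * real b - 1) / 12"
      using b3 by (simp add: sum_cyc_all)
    finally show ?thesis by (simp add: field_simps)
  qed
  show ?thesis unfolding split_n[of "\<lambda>v. d v * S v"] A P B by (simp add: field_simps)
qed

end


context cbg begin

lemma sum_Xr: "(\<Sum>t<n. Xr t t) = (\<Sum>v<n. d v * G v v) - (\<Sum>v<n. d v * S v) / real NN"
  unfolding Xr_def pp_def by (simp add: sum_subtractf sum_divide_distrib)

lemma final_real:
  "real NN - real n + (\<Sum>t<n. Xr t t) =
     1 / (real a + real b + real k - 1) *
       ((real a + 1) * (real a - 1) / 6 * (real a + 2 * (real b + real k - 1))
      + (real b + 1) * (real b - 1) / 6 * (real b + 2 * (real a + real k - 1))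
      + (real a + real b) * (real k - 1)^2
      + (real k - 1) * (2 * (real k)^2 - 4 * real k + 3) / 6
      + 2 * real a * real b * (real k - 1))
     + real a + real b + real k"
proof -
  have NN: "real NN = 2 * (real a + real b + real k - 1)" unfolding NN_def using k2 by simp
  have nn: "real n = real a + real b + real k - 2" unfolding n_def using k2 by simp
  have pos: "real a + real b + real k - 1 > 0" using a3 by simp
  show ?thesis unfolding sum_Xr S1_val S2_val TT_val NN nn using pos
    by (simp add: field_simps power2_eq_square)
qed

end

theorem corollary5p3:
  fixes a b k :: nat
  assumes "a \<ge> 3" and "b \<ge> 3" and "k \<ge> 2"
  shows "kemeny_edge (cb_vertices k a b) (cb_adj k a b) =
    complex_of_real
     (1 / (real a + real b + real k - 1) *
       ((real a + 1) * (real a - 1) / 6 * (real a + 2 * (real b + real k - 1))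
      + (real b + 1) * (real b - 1) / 6 * (real b + 2 * (real a + real k - 1))
      + (real a + real b) * (real k - 1)^2
      + (real k - 1) * (2 * (real k)^2 - 4 * real k + 3) / 6
      + 2 * real a * real b * (real k - 1))
     + real a + real b + real k)"
proof -
  interpret cbg a b k using assms by unfold_locales
  show ?thesis unfolding kemeny_arc final_real ..
qed



end
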